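(* Let $g\ge1$, $0\le g'<g$, $g''=g-g'$, fix Siegel sets $\mathfrak{F}_g(u)$, $\mathfrak{F}_{g'}(u)$, $\mathfrak{F}^+_{g''}(u)$, and fix $(\tau',t)\in\mathfrak{F}_{g'}(u)\times\mathfrak{F}^+_{g''}(u)$. There exists a constant $C>0$, depending only on the Siegel set data and on $\tau'$, such that for every $\tau\in\pi_{g'}^{-1}(\tau',t)\cap\mathfrak{F}_g(u)$ and every vertical tangent vector $V=V_X+iV_Y\in T_\tau\mathfrak{S}_g$ (i.e. $d\pi_{g'}(V)=0$), $$\|V\|_\tau^2\le\frac{C}{\lambda_{\min}(t)}\Big(\|V'''_X\|_{\mathcal F}^2+\|V'''_Y\|_{\mathcal F}^2\Big)+\frac{C}{\lambda_{\min}(t)^2}\|V''_X\|_{\mathcal F}^2,$$ where $\lambda_{\min}(t)$ is the smallest eigenvalue of $t$ and $\|\cdot\|_{\mathcal F}$ is the Frobenius norm.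
   Context: $\mathfrak{S}_g=\{\tau\in\mathrm{Sym}(g,\mathbb{C}):\operatorname{Im}\tau>0\}$, $\tau=X+iY$. The Weil–Petersson norm of $V=V_X+iV_Y\in\mathrm{Sym}(g,\mathbb{C})\cong T_\tau\mathfrak{S}_g$ is $\|V\|_\tau^2=\frac12\big(\operatorname{tr}(Y^{-1}V_XY^{-1}V_X)+\operatorname{tr}(Y^{-1}V_YY^{-1}V_Y)\big)$. Block decompositions: $\tau=\begin{pmatrix}\tau'&\tau'''\\{}^t\tau'''&\tau''\end{pmatrix}$ with $\tau'$ of size $g'\times g'$ and $\tau''$ of size $g''\times g''$; the same for $X,Y,V_X,V_Y$. The map $\pi_{g'}:\mathfrak{S}_g\to\mathfrak{S}_{g'}\times\mathrm{Sym}^+(g'',\mathbb{R})$ is $\pi_{g'}(\tau)=(\tau',\,Y''-{}^tY'''(Y')^{-1}Y''')$. Jacobi decomposition $Y=LDL^t$, $L=(l_{ij})$ lower triangular unipotent, $D=\mathrm{diag}(d_1,\dots,d_g)$; Siegel sets $\mathfrak{F}_g(u)=\{X+iY: |x_{ij}|<u,\ |l_{ij}|<u,\ 1<ud_1,\ d_i<ud_{i+1}\}$ and $\mathfrak{F}^+_g(u)=\{Y\in\mathrm{Sym}^+(g,\mathbb{R}): |l_{ij}|<u,\ 1<ud_1,\ d_i<ud_{i+1}\}$. *)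

theory Defs
  imports Complex_Main "Jordan_Normal_Form.Matrix" "Jordan_Normal_Form.Char_Poly"
begin

(* A point tau = X + iY of the
   Siegel upper half space is represented by the pair (X, Y) of real g x g matrices,
   a tangent vector V = V_X + i V_Y by the pair (V_X, V_Y). *)

definition sym_mat :: "nat \<Rightarrow> real mat \<Rightarrow> bool" where
  "sym_mat n A \<longleftrightarrow> A \<in> carrier_mat n n \<and> transpose_mat A = A"

definition pos_def_mat :: "nat \<Rightarrow> real mat \<Rightarrow> bool" where
  "pos_def_mat n A \<longleftrightarrow> sym_mat n A \<and>
     (\<forall>v \<in> carrier_vec n. v \<noteq> 0\<^sub>v n \<longrightarrow> scalar_prod v (A *\<^sub>v v) > 0)"

definition siegel_space :: "nat \<Rightarrow> real mat \<Rightarrow> real mat \<Rightarrow> bool" where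
  "siegel_space n X Y \<longleftrightarrow> sym_mat n X \<and> pos_def_mat n Y"

definition minv :: "real mat \<Rightarrow> real mat" where
  "minv A = (THE B. B \<in> carrier_mat (dim_row A) (dim_row A) \<and>
                    A * B = 1\<^sub>m (dim_row A) \<and> B * A = 1\<^sub>m (dim_row A))"

definition mtrace :: "real mat \<Rightarrow> real" where
  "mtrace A = (\<Sum>i<dim_row A. A $$ (i, i))"

definition frob2 :: "real mat \<Rightarrow> real" where
  "frob2 A = (\<Sum>i<dim_row A. \<Sum>j<dim_col A. (A $$ (i, j))\<^sup>2)"

definition lambda_min :: "real mat \<Rightarrow> real" where
  "lambda_min A = Min {k. eigenvalue A k}"

(* block decomposition with respect to k = g' :  A = (A', A'''; A'''^t, A'') *)
definition blk1 :: "nat \<Rightarrow> real mat \<Rightarrow> real mat" where   (* A'   *)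
  "blk1 k A = mat k k (\<lambda>(i, j). A $$ (i, j))"
definition blk3 :: "nat \<Rightarrow> real mat \<Rightarrow> real mat" where   (* A''' *)
  "blk3 k A = mat k (dim_col A - k) (\<lambda>(i, j). A $$ (i, j + k))"
definition blk2 :: "nat \<Rightarrow> real mat \<Rightarrow> real mat" where   (* A''  *)
  "blk2 k A = mat (dim_row A - k) (dim_col A - k) (\<lambda>(i, j). A $$ (i + k, j + k))"

(* second component of pi_{g'}: Y'' - (Y''')^t (Y')^{-1} Y''' *)
definition schur :: "nat \<Rightarrow> real mat \<Rightarrow> real mat" where
  "schur k Y = blk2 k Y - transpose_mat (blk3 k Y) * minv (blk1 k Y) * blk3 k Y"

(* d pi_{g'}(V) = 0 at tau = X + iY, expressed through the directional derivatives
   of all real components of pi_{g'}(tau) = (X' + i Y', schur(Y)) along V *)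
definition vertical :: "nat \<Rightarrow> real mat \<Rightarrow> real mat \<Rightarrow> real mat \<Rightarrow> real mat \<Rightarrow> bool" where
  "vertical k X Y VX VY \<longleftrightarrow>
     (\<forall>i<k. \<forall>j<k.
        ((\<lambda>s. blk1 k (X + s \<cdot>\<^sub>m VX) $$ (i, j)) has_real_derivative 0) (at 0) \<and>
        ((\<lambda>s. blk1 k (Y + s \<cdot>\<^sub>m VY) $$ (i, j)) has_real_derivative 0) (at 0)) \<and>
     (\<forall>i<dim_row Y - k. \<forall>j<dim_row Y - k.
        ((\<lambda>s. schur k (Y + s \<cdot>\<^sub>m VY) $$ (i, j)) has_real_derivative 0) (at 0))"

definition wp_norm2 :: "real mat \<Rightarrow> real mat \<Rightarrow> real mat \<Rightarrow> real" where
  "wp_norm2 Y VX VY = (1/2) * (mtrace (minv Y * VX * minv Y * VX) + mtrace (minv Y * VY * minv Y * VY))"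

definition jacobi_siegel :: "nat \<Rightarrow> real \<Rightarrow> real mat \<Rightarrow> bool" where
  "jacobi_siegel n u Y \<longleftrightarrow>
     (\<exists>L D. L \<in> carrier_mat n n \<and> D \<in> carrier_mat n n \<and>
        (\<forall>i<n. L $$ (i, i) = 1) \<and> (\<forall>i j. i < j \<and> j < n \<longrightarrow> L $$ (i, j) = 0) \<and>
        diagonal_mat D \<and> Y = L * D * transpose_mat L \<and>
        (\<forall>i j. j < i \<and> i < n \<longrightarrow> \<bar>L $$ (i, j)\<bar> < u) \<and>
        (0 < n \<longrightarrow> 1 < u * D $$ (0, 0)) \<and>
        (\<forall>i. Suc i < n \<longrightarrow> D $$ (i, i) < u * D $$ (Suc i, Suc i)))"

definition siegel_set_plus :: "nat \<Rightarrow> real \<Rightarrow> real mat \<Rightarrow> bool" where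
  "siegel_set_plus n u Y \<longleftrightarrow> pos_def_mat n Y \<and> jacobi_siegel n u Y"

definition siegel_set :: "nat \<Rightarrow> real \<Rightarrow> real mat \<Rightarrow> real mat \<Rightarrow> bool" where
  "siegel_set n u X Y \<longleftrightarrow> siegel_space n X Y \<and>
     (\<forall>i<n. \<forall>j<n. \<bar>X $$ (i, j)\<bar> < u) \<and> jacobi_siegel n u Y"

end

theory Submission
  imports Defs
begin

lemma inv_ex:
  assumes A: "(A::real mat) \<in> carrier_mat n n" and d: "det A \<noteq> 0"
  shows "\<exists>B. B \<in> carrier_mat n n \<and> A * B = 1\<^sub>m n \<and> B * A = 1\<^sub>m n"
  using det_non_zero_imp_unit[OF A d, of undefined] unfolding Units_def ring_mat_def by auto

lemma minv_eq:
  assumes A: "(A::real mat) \<in> carrier_mat n n" and B: "B \<in> carrier_mat n n" and AB: "A * B = 1\<^sub>m n"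
  shows "minv A = B"
proof -
  have BA: "B * A = 1\<^sub>m n" using mat_mult_left_right_inverse[OF A B AB] .
  have dr: "dim_row A = n" using A by auto
  show ?thesis unfolding minv_def dr
  proof (rule the_equality)
    show "B \<in> carrier_mat n n \<and> A * B = 1\<^sub>m n \<and> B * A = 1\<^sub>m n" using B AB BA by auto
  next
    fix B' assume h: "B' \<in> carrier_mat n n \<and> A * B' = 1\<^sub>m n \<and> B' * A = 1\<^sub>m n"
    have "B' = B' * (A * B)" using AB h by auto
    also have "\<dots> = (B' * A) * B" using h A B by (metis assoc_mult_mat)
    also have "\<dots> = B" using h B by auto
    finally show "B' = B" .
  qed
qed

lemma pd_det: assumes "pos_def_mat n A" shows "det A \<noteq> 0"
proof
  assume "det A = 0"
  have A: "A \<in> carrier_mat n n" using assms unfolding pos_def_mat_def sym_mat_def by auto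
  from \<open>det A = 0\<close> obtain v where v: "v \<in> carrier_vec n" "v \<noteq> 0\<^sub>v n" "A *\<^sub>v v = 0\<^sub>v n"
    using det_0_iff_vec_prod_zero_field[OF A] by auto
  then have "v \<bullet> (A *\<^sub>v v) > 0" using assms unfolding pos_def_mat_def by auto
  with v show False by simp
qed

lemma minv_props:
  assumes A: "(A::real mat) \<in> carrier_mat n n" and d: "det A \<noteq> 0"
  shows "minv A \<in> carrier_mat n n" "A * minv A = 1\<^sub>m n" "minv A * A = 1\<^sub>m n"
proof -
  obtain B where B: "B \<in> carrier_mat n n" "A * B = 1\<^sub>m n" "B * A = 1\<^sub>m n" using inv_ex[OF A d] by auto
  have "minv A = B" using minv_eq[OF A B(1,2)] .
  then show "minv A \<in> carrier_mat n n" "A * minv A = 1\<^sub>m n" "minv A * A = 1\<^sub>m n" using B by auto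
qed

lemma minv_sym:
  assumes A: "(A::real mat) \<in> carrier_mat n n" and d: "det A \<noteq> 0" and s: "transpose_mat A = A"
  shows "transpose_mat (minv A) = minv A"
proof -
  note p = minv_props[OF A d]
  have "A * transpose_mat (minv A) = transpose_mat (minv A * A)"
    using transpose_mult[OF p(1) A] s by simp
  also have "\<dots> = 1\<^sub>m n" using p by simp
  finally have "minv A = transpose_mat (minv A)"
    using minv_eq[OF A _ ] p(1) by auto
  then show ?thesis by simp
qed

definition qf :: "nat \<Rightarrow> real mat \<Rightarrow> (nat \<Rightarrow> real) \<Rightarrow> real" where
  "qf n A x = (\<Sum>i<n. \<Sum>j<n. x i * A $$ (i, j) * x j)"
definition bf :: "nat \<Rightarrow> real mat \<Rightarrow> (nat \<Rightarrow> real) \<Rightarrow> (nat \<Rightarrow> real) \<Rightarrow> real" where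
  "bf n A x y = (\<Sum>i<n. \<Sum>j<n. x i * A $$ (i, j) * y j)"
definition nsq :: "nat \<Rightarrow> (nat \<Rightarrow> real) \<Rightarrow> real" where
  "nsq n x = (\<Sum>i<n. (x i)\<^sup>2)"

definition symm :: "nat \<Rightarrow> real mat \<Rightarrow> bool" where
  "symm n A \<longleftrightarrow> (\<forall>i<n. \<forall>j<n. A $$ (i, j) = A $$ (j, i))"

lemma nsq_nonneg: "nsq n x \<ge> 0" unfolding nsq_def by (auto intro: sum_nonneg)

lemma nsq_zero: assumes "nsq n x = 0" "i < n" shows "x i = 0"
proof -
  have "(x i)\<^sup>2 \<le> nsq n x" unfolding nsq_def
    by (rule member_le_sum[of i "{..<n}" "\<lambda>i. (x i)\<^sup>2"]) (use assms in auto)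
  then show ?thesis using assms by simp
qed

lemma qf_zero_vec: assumes "\<And>i. i < n \<Longrightarrow> x i = 0" shows "qf n A x = 0"
  unfolding qf_def using assms by simp

lemma vec_qf: assumes A: "A \<in> carrier_mat n n" and v: "v \<in> carrier_vec n"
  shows "v \<bullet> (A *\<^sub>v v) = qf n A (\<lambda>i. v $ i)"
  using A v unfolding qf_def
  by (auto simp: scalar_prod_def lessThan_atLeast0 sum_distrib_left mult.assoc intro!: sum.cong)

lemma pd_qf_pos: assumes "pos_def_mat n A" "i < n" "x i \<noteq> 0" shows "qf n A x > 0"
proof -
  have A: "A \<in> carrier_mat n n" using assms unfolding pos_def_mat_def sym_mat_def by auto
  let ?v = "vec n x"
  have v: "?v \<in> carrier_vec n" by simp
  have "?v \<noteq> 0\<^sub>v n" using assms(2,3) by (metis index_vec index_zero_vec(1))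
  then have "?v \<bullet> (A *\<^sub>v ?v) > 0" using assms(1) v unfolding pos_def_mat_def by auto
  also have "?v \<bullet> (A *\<^sub>v ?v) = qf n A (\<lambda>i. ?v $ i)" by (rule vec_qf[OF A v])
  also have "\<dots> = qf n A x" unfolding qf_def by (auto intro!: sum.cong)
  finally show ?thesis .
qed

lemma pd_qf_nonneg: assumes "pos_def_mat n A" shows "qf n A x \<ge> 0"
proof (cases "\<exists>i<n. x i \<noteq> 0")
  case True then show ?thesis using pd_qf_pos[OF assms] by force
next
  case False then show ?thesis using qf_zero_vec by (metis order_refl)
qed

lemma sym_symm: assumes "sym_mat n A" shows "symm n A"
  using assms unfolding sym_mat_def symm_def
  by (metis carrier_matD(1) carrier_matD(2) index_transpose_mat(1))

lemma qf_expand: assumes "symm n A"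
  shows "qf n A (\<lambda>i. x i + r * y i) = qf n A x + 2 * r * bf n A x y + r\<^sup>2 * qf n A y"
proof -
  have sw: "bf n A y x = bf n A x y" unfolding bf_def
    apply (subst sum.swap) using assms unfolding symm_def by (auto intro!: sum.cong)
  have "qf n A (\<lambda>i. x i + r * y i) = qf n A x + r * bf n A x y + r * bf n A y x + r\<^sup>2 * qf n A y"
    unfolding qf_def bf_def
    by (simp add: algebra_simps power2_eq_square sum.distrib sum_distrib_left)
  then show ?thesis using sw by simp
qed

lemma quad_disc: fixes a b c :: real
  assumes "\<And>r. a + 2 * r * b + r\<^sup>2 * c \<ge> 0" and "c \<ge> 0"
  shows "b\<^sup>2 \<le> a * c"
proof (cases "c = 0")
  case True
  show ?thesis
  proof (rule ccontr)
    assume "\<not> ?thesis"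
    then have "b \<noteq> 0" using True by simp
    have "a + 2 * (-(a+1)/(2*b)) * b + (-(a+1)/(2*b))\<^sup>2 * c \<ge> 0" by (rule assms)
    then show False using True \<open>b \<noteq> 0\<close> by (simp add: field_simps)
  qed
next
  case False
  then have c: "c > 0" using assms by simp
  have "a + 2 * (-b/c) * b + (-b/c)\<^sup>2 * c \<ge> 0" by (rule assms)
  then have "a + 2 * (-b/c) * b + (-b/c)\<^sup>2 * c = a - b\<^sup>2 / c" using c by (simp add: field_simps power2_eq_square)
  then have "a - b\<^sup>2/c \<ge> 0" using \<open>a + 2 * (-b/c) * b + (-b/c)\<^sup>2 * c \<ge> 0\<close> by simp
  then show ?thesis using c by (simp add: field_simps)
qed

lemma psd_cs: assumes "symm n A" "\<And>z. qf n A z \<ge> 0"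
  shows "(bf n A x y)\<^sup>2 \<le> qf n A x * qf n A y"
  by (rule quad_disc) (use qf_expand[OF assms(1)] assms(2) in metis)+

lemma mult_entry: assumes "A \<in> carrier_mat n m" "B \<in> carrier_mat m p" "i < n" "k < p"
  shows "(A * B) $$ (i, k) = (\<Sum>j<m. A $$ (i, j) * B $$ (j, k))"
  using assms by (auto simp: scalar_prod_def lessThan_atLeast0 intro!: sum.cong)

lemma inv_apply: assumes A: "(A::real mat) \<in> carrier_mat n n" and B: "B \<in> carrier_mat n n" and AB: "A * B = 1\<^sub>m n"
  and i: "i < n"
  shows "(\<Sum>j<n. A $$ (i, j) * (\<Sum>k<n. B $$ (j, k) * x k)) = x i"
proof -
  have "(\<Sum>j<n. A $$ (i, j) * (\<Sum>k<n. B $$ (j, k) * x k)) = (\<Sum>k<n. (\<Sum>j<n. A $$ (i, j) * B $$ (j, k)) * x k)"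
  proof -
    have "(\<Sum>j<n. A $$ (i, j) * (\<Sum>k<n. B $$ (j, k) * x k)) = (\<Sum>j<n. \<Sum>k<n. A $$ (i, j) * B $$ (j, k) * x k)"
      by (simp add: sum_distrib_left mult.assoc)
    also have "\<dots> = (\<Sum>k<n. \<Sum>j<n. A $$ (i, j) * B $$ (j, k) * x k)" by (rule sum.swap)
    also have "\<dots> = (\<Sum>k<n. (\<Sum>j<n. A $$ (i, j) * B $$ (j, k)) * x k)" by (simp add: sum_distrib_right)
    finally show ?thesis .
  qed
  also have "\<dots> = (\<Sum>k<n. (A * B) $$ (i, k) * x k)"
    using mult_entry[OF A B i] by auto
  also have "\<dots> = (\<Sum>k<n. (if i = k then 1 else 0) * x k)" using AB i by (auto intro!: sum.cong)
  also have "\<dots> = (\<Sum>k<n. (if i = k then x k else 0))" by (rule sum.cong) auto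
  also have "\<dots> = x i" using i by (simp add: sum.delta)
  finally show ?thesis .
qed

lemma abs_prod_le_nsq: assumes "i < n" "j < n" shows "\<bar>x i * x j\<bar> \<le> nsq n x"
proof -
  have a: "(x i)\<^sup>2 \<le> nsq n x" unfolding nsq_def
    by (rule member_le_sum[of i "{..<n}" "\<lambda>i. (x i)\<^sup>2"]) (use assms in auto)
  have b: "(x j)\<^sup>2 \<le> nsq n x" unfolding nsq_def
    by (rule member_le_sum[of j "{..<n}" "\<lambda>i. (x i)\<^sup>2"]) (use assms in auto)
  have "\<bar>x i * x j\<bar> \<le> ((x i)\<^sup>2 + (x j)\<^sup>2) / 2"
  proof -
    have h: "0 \<le> (\<bar>x i\<bar> - \<bar>x j\<bar>)\<^sup>2" by simp
    have e: "(\<bar>x i\<bar> - \<bar>x j\<bar>)\<^sup>2 = (x i)\<^sup>2 + (x j)\<^sup>2 - 2 * (\<bar>x i\<bar> * \<bar>x j\<bar>)"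
      by (simp add: power2_diff)
    show ?thesis using h e by (simp add: abs_mult)
  qed
  then show ?thesis using a b by simp
qed

lemma bilin_bound: "\<bar>(\<Sum>i<n. \<Sum>j<n. x i * B $$ (i, j) * x j)\<bar> \<le> (\<Sum>i<n. \<Sum>j<n. \<bar>B $$ (i, j)\<bar>) * nsq n x"
proof -
  have "\<bar>(\<Sum>i<n. \<Sum>j<n. x i * B $$ (i, j) * x j)\<bar> \<le> (\<Sum>i<n. \<Sum>j<n. \<bar>x i * B $$ (i, j) * x j\<bar>)"
    by (rule order_trans[OF sum_abs]) (auto intro!: sum_mono sum_abs)
  also have "\<dots> \<le> (\<Sum>i<n. \<Sum>j<n. \<bar>B $$ (i, j)\<bar> * nsq n x)"
  proof (intro sum_mono)
    fix i j assume "i \<in> {..<n}" "j \<in> {..<n}"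
    then have "\<bar>x i * x j\<bar> \<le> nsq n x" using abs_prod_le_nsq by auto
    then have "\<bar>B $$ (i, j)\<bar> * \<bar>x i * x j\<bar> \<le> \<bar>B $$ (i, j)\<bar> * nsq n x" by (simp add: mult_left_mono)
    then show "\<bar>x i * B $$ (i, j) * x j\<bar> \<le> \<bar>B $$ (i, j)\<bar> * nsq n x" by (simp add: abs_mult algebra_simps)
  qed
  also have "\<dots> = (\<Sum>i<n. \<Sum>j<n. \<bar>B $$ (i, j)\<bar>) * nsq n x" by (simp add: sum_distrib_right)
  finally show ?thesis .
qed

lemma unif_pd:
  assumes A: "A \<in> carrier_mat n n" and s: "symm n A" and psd: "\<And>z. qf n A z \<ge> 0"
    and B: "B \<in> carrier_mat n n" and AB: "A * B = 1\<^sub>m n"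
  shows "\<exists>e>0. \<forall>x. qf n A x \<ge> e * nsq n x"
proof -
  define K where "K = (\<Sum>i<n. \<Sum>j<n. \<bar>B $$ (i, j)\<bar>)"
  have K0: "K \<ge> 0" unfolding K_def by (auto intro: sum_nonneg)
  have "\<forall>x. qf n A x \<ge> (1 / (K + 1)) * nsq n x"
  proof
    fix x
    define y where "y = (\<lambda>i. \<Sum>k<n. B $$ (i, k) * x k)"
    have Ay: "\<And>i. i < n \<Longrightarrow> (\<Sum>j<n. A $$ (i, j) * y j) = x i"
      unfolding y_def using inv_apply[OF A B AB] by auto
    have "bf n A x y = (\<Sum>i<n. x i * (\<Sum>j<n. A $$ (i, j) * y j))"
      unfolding bf_def by (simp add: sum_distrib_left mult.assoc)
    also have "\<dots> = nsq n x" unfolding nsq_def using Ay by (auto simp: power2_eq_square intro!: sum.cong)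
    finally have bxy: "bf n A x y = nsq n x" .
    have "qf n A y = (\<Sum>i<n. y i * (\<Sum>j<n. A $$ (i, j) * y j))"
      unfolding qf_def by (simp add: sum_distrib_left mult.assoc)
    also have "\<dots> = (\<Sum>i<n. y i * x i)" using Ay by (auto intro!: sum.cong)
    also have "\<dots> = (\<Sum>i<n. \<Sum>k<n. x k * B $$ (i, k) * x i)" unfolding y_def
      by (simp add: sum_distrib_right sum_distrib_left mult.commute mult.left_commute)
    also have "\<dots> = (\<Sum>i<n. \<Sum>k<n. x i * B $$ (k, i) * x k)"
      by (subst sum.swap) (simp add: mult.commute mult.left_commute)
    finally have "qf n A y = (\<Sum>i<n. \<Sum>k<n. x i * B $$ (k, i) * x k)" .
    also have "\<dots> \<le> (\<Sum>i<n. \<Sum>j<n. \<bar>transpose_mat B $$ (i, j)\<bar>) * nsq n x"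
    proof -
      have "(\<Sum>i<n. \<Sum>k<n. x i * B $$ (k, i) * x k) = (\<Sum>i<n. \<Sum>k<n. x i * transpose_mat B $$ (i, k) * x k)"
        using B by (auto intro!: sum.cong)
      then show ?thesis using bilin_bound[where n=n and x=x and B="transpose_mat B"] by simp
    qed
    also have "(\<Sum>i<n. \<Sum>j<n. \<bar>transpose_mat B $$ (i, j)\<bar>) = K" unfolding K_def
      using B by (subst sum.swap) (auto intro!: sum.cong)
    finally have qy: "qf n A y \<le> K * nsq n x" .
    have cs: "(nsq n x)\<^sup>2 \<le> qf n A x * qf n A y" using psd_cs[OF s psd, of x y] bxy by simp
    have qx0: "qf n A x \<ge> 0" by (rule psd)
    show "qf n A x \<ge> (1 / (K + 1)) * nsq n x"
    proof (cases "nsq n x = 0")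
      case True then show ?thesis using qx0 by simp
    next
      case False
      then have np: "nsq n x > 0" using nsq_nonneg[of n x] by simp
      have "(nsq n x)\<^sup>2 \<le> qf n A x * (K * nsq n x)"
        using cs mult_left_mono[OF qy qx0] by linarith
      then have "nsq n x * nsq n x \<le> (qf n A x * K) * nsq n x" by (simp add: power2_eq_square algebra_simps)
      then have "nsq n x \<le> qf n A x * K" using np by simp
      also have "\<dots> \<le> qf n A x * (K + 1)" using qx0 by (simp add: mult_left_mono)
      finally show ?thesis using K0 by (simp add: field_simps)
    qed
  qed
  then show ?thesis using K0 by (intro exI[of _ "1/(K+1)"]) auto
qed

lemma qf_scale: "qf n A (\<lambda>i. c * x i) = c\<^sup>2 * qf n A x"
  unfolding qf_def by (simp add: sum_distrib_left power2_eq_square algebra_simps)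

lemma nsq_scale: "nsq n (\<lambda>i. c * x i) = c\<^sup>2 * nsq n x"
  unfolding nsq_def by (simp add: sum_distrib_left power_mult_distrib)

lemma qf_shift: assumes "A \<in> carrier_mat n n"
  shows "qf n (A + (-m) \<cdot>\<^sub>m 1\<^sub>m n) x = qf n A x - m * nsq n x"
proof -
  have "qf n (A + (-m) \<cdot>\<^sub>m 1\<^sub>m n) x = (\<Sum>i<n. \<Sum>j<n. x i * A $$ (i, j) * x j - (if i = j then m * (x i)\<^sup>2 else 0))"
    unfolding qf_def using assms by (auto simp: algebra_simps power2_eq_square intro!: sum.cong)
  also have "\<dots> = qf n A x - m * nsq n x"
    unfolding qf_def nsq_def by (simp add: sum_subtractf sum.delta sum_distrib_left)
  finally show ?thesis .
qed

lemma lammin: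
  assumes pd: "pos_def_mat n t" and n: "1 \<le> n"
  shows "eigenvalue t (lambda_min t)" "\<And>x. qf n t x \<ge> lambda_min t * nsq n x"
proof -
  have tc: "t \<in> carrier_mat n n" and ts: "symm n t"
    using pd sym_symm unfolding pos_def_mat_def sym_mat_def by auto
  define S where "S = {qf n t x | x. nsq n x = 1}"
  define mu where "mu = Inf S"
  define e0 where "e0 = (\<lambda>i::nat. if i = 0 then 1 else (0::real))"
  have "nsq n e0 = (\<Sum>i<n. e0 i)" unfolding nsq_def e0_def by (rule sum.cong) auto
  also have "\<dots> = 1" unfolding e0_def using n by (simp add: sum.delta)
  finally have "nsq n e0 = 1" .
  then have Sne: "S \<noteq> {}" unfolding S_def by auto
  have Sbdd: "bdd_below S" unfolding S_def bdd_below_def using pd_qf_nonneg[OF pd] by auto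
  have low: "qf n t x \<ge> mu * nsq n x" for x
  proof (cases "nsq n x = 0")
    case True
    then have "qf n t x = 0" using nsq_zero qf_zero_vec by metis
    then show ?thesis using True by simp
  next
    case False
    then have np: "nsq n x > 0" using nsq_nonneg[of n x] by simp
    define c where "c = 1 / sqrt (nsq n x)"
    have c2: "c\<^sup>2 = 1 / nsq n x" unfolding c_def using np by (simp add: power_divide)
    have "nsq n (\<lambda>i. c * x i) = 1" using nsq_scale c2 np by simp
    then have "qf n t (\<lambda>i. c * x i) \<in> S" unfolding S_def by blast
    then have "mu \<le> qf n t (\<lambda>i. c * x i)" unfolding mu_def using Sbdd by (rule cInf_lower)
    also have "\<dots> = qf n t x / nsq n x" using qf_scale c2 by simp
    finally show ?thesis using np by (simp add: field_simps)
  qed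
  have ev_ge: "mu \<le> k" if "eigenvalue t k" for k
  proof -
    from that obtain v where v: "eigenvector t v k" unfolding eigenvalue_def by blast
    have dr: "dim_row t = n" using tc by auto
    have vc: "v \<in> carrier_vec n" and v0: "v \<noteq> 0\<^sub>v n" and tv: "t *\<^sub>v v = k \<cdot>\<^sub>v v"
      using v unfolding eigenvector_def dr by auto
    have "qf n t (\<lambda>i. v $ i) = v \<bullet> (t *\<^sub>v v)" using vec_qf[OF tc vc] by simp
    also have "\<dots> = k * (v \<bullet> v)" using tv vc by simp
    also have "v \<bullet> v = nsq n (\<lambda>i. v $ i)" unfolding nsq_def scalar_prod_def using vc
      by (auto simp: lessThan_atLeast0 power2_eq_square)
    finally have eq: "qf n t (\<lambda>i. v $ i) = k * nsq n (\<lambda>i. v $ i)" .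
    obtain i where i: "i < n" "v $ i \<noteq> 0" using v0 vc by (metis eq_vecI carrier_vecD index_zero_vec)
    have "nsq n (\<lambda>i. v $ i) \<noteq> 0" using nsq_zero[of n "\<lambda>i. v $ i" i] i by auto
    then have np: "nsq n (\<lambda>i. v $ i) > 0" using nsq_nonneg by (metis less_eq_real_def)
    have "mu * nsq n (\<lambda>i. v $ i) \<le> k * nsq n (\<lambda>i. v $ i)" using low eq by metis
    then show ?thesis using np by simp
  qed
  have mu_ev: "eigenvalue t mu"
  proof (rule ccontr)
    assume ne: "\<not> eigenvalue t mu"
    define M where "M = char_matrix t mu"
    have Mc: "M \<in> carrier_mat n n" unfolding M_def using tc by simp
    have Me: "M = t + (-mu) \<cdot>\<^sub>m 1\<^sub>m n" unfolding M_def char_matrix_def using tc by simp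
    have dM: "det M \<noteq> 0" using ne eigenvalue_det[OF tc] unfolding M_def by simp
    have Ms: "symm n M" using ts tc unfolding Me symm_def by auto
    have Mq: "qf n M x = qf n t x - mu * nsq n x" for x unfolding Me by (rule qf_shift[OF tc])
    have Mpsd: "qf n M z \<ge> 0" for z using low[of z] Mq[of z] by simp
    obtain B where B: "B \<in> carrier_mat n n" "M * B = 1\<^sub>m n" using inv_ex[OF Mc dM] by auto
    obtain e where e: "e > 0" "\<And>x. qf n M x \<ge> e * nsq n x" using unif_pd[OF Mc Ms Mpsd B] by auto
    have "mu + e \<le> Inf S" unfolding S_def
    proof (rule cInf_greatest)
      show "{qf n t x |x. nsq n x = 1} \<noteq> {}" using Sne unfolding S_def .
      fix s assume "s \<in> {qf n t x |x. nsq n x = 1}"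
      then obtain x where "s = qf n t x" "nsq n x = 1" by auto
      then show "mu + e \<le> s" using e(2)[of x] Mq[of x] by simp
    qed
    then show False using e(1) unfolding mu_def by simp
  qed
  have fin: "finite {k. eigenvalue t k}"
  proof -
    have "char_poly t \<noteq> 0" using degree_monic_char_poly[OF tc] by auto
    then have "finite {k. poly (char_poly t) k = 0}" by (rule poly_roots_finite)
    then show ?thesis using eigenvalue_root_char_poly[OF tc] by simp
  qed
  have "lambda_min t = mu" unfolding lambda_min_def
    by (rule Min_eqI[OF fin]) (use ev_ge mu_ev in auto)
  then show "eigenvalue t (lambda_min t)" "\<And>x. qf n t x \<ge> lambda_min t * nsq n x"
    using mu_ev low by auto
qed

lemma sq_sum_ge: fixes a :: "nat \<Rightarrow> real" assumes "finite A" "\<And>i. i \<in> A \<Longrightarrow> a i \<ge> 0"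
  shows "(\<Sum>i\<in>A. (a i)\<^sup>2) \<le> (\<Sum>i\<in>A. a i)\<^sup>2"
  using assms
proof (induction A rule: finite_induct)
  case (insert x F)
  have "(\<Sum>i\<in>insert x F. (a i)\<^sup>2) = (a x)\<^sup>2 + (\<Sum>i\<in>F. (a i)\<^sup>2)" using insert by simp
  also have "\<dots> \<le> (a x)\<^sup>2 + (\<Sum>i\<in>F. a i)\<^sup>2" using insert by simp
  also have "\<dots> \<le> (a x + (\<Sum>i\<in>F. a i))\<^sup>2"
    using insert sum_nonneg[of F a] by (simp add: power2_sum)
  finally show ?case using insert by simp
qed simp

lemma sq_sum_le: fixes a :: "nat \<Rightarrow> real" assumes "finite A"
  shows "(\<Sum>i\<in>A. a i)\<^sup>2 \<le> real (card A) * (\<Sum>i\<in>A. (a i)\<^sup>2)"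
proof -
  have "(\<Sum>i\<in>A. a i)\<^sup>2 = (\<Sum>i\<in>A. \<Sum>j\<in>A. a i * a j)" by (simp add: power2_eq_square sum_product)
  also have "\<dots> \<le> (\<Sum>i\<in>A. \<Sum>j\<in>A. ((a i)\<^sup>2 + (a j)\<^sup>2) / 2)"
  proof (intro sum_mono)
    fix i j
    have "0 \<le> (a i - a j)\<^sup>2" by simp
    then show "a i * a j \<le> ((a i)\<^sup>2 + (a j)\<^sup>2) / 2" by (simp add: power2_diff)
  qed
  also have "\<dots> = (\<Sum>i\<in>A. \<Sum>j\<in>A. (a i)\<^sup>2 / 2) + (\<Sum>i\<in>A. \<Sum>j\<in>A. (a j)\<^sup>2 / 2)"
    by (simp add: sum.distrib add_divide_distrib)
  also have "(\<Sum>i\<in>A. \<Sum>j\<in>A. (a j)\<^sup>2 / 2) = (\<Sum>i\<in>A. \<Sum>j\<in>A. (a i)\<^sup>2 / 2)" by (rule sum.swap)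
  also have "(\<Sum>i\<in>A. \<Sum>j\<in>A. (a i)\<^sup>2 / 2) = real (card A) * (\<Sum>i\<in>A. (a i)\<^sup>2) / 2"
    by (simp add: sum_distrib_left[symmetric] sum_divide_distrib[symmetric])
  finally show ?thesis by simp
qed

lemma jac_entry:
  assumes L: "(L::real mat) \<in> carrier_mat k n" and D: "D \<in> carrier_mat n n" and dg: "diagonal_mat D"
    and i: "i < k" and j: "j < k"
  shows "(L * D * transpose_mat L) $$ (i, j) = (\<Sum>m<n. L $$ (i, m) * D $$ (m, m) * L $$ (j, m))"
proof -
  have LD: "L * D \<in> carrier_mat k n" using L D by simp
  have e1: "(L * D) $$ (i, m) = L $$ (i, m) * D $$ (m, m)" if m: "m < n" for m
  proof -
    have "(L * D) $$ (i, m) = (\<Sum>k<n. L $$ (i, k) * D $$ (k, m))" using mult_entry[OF L D i m] .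
    also have "\<dots> = (\<Sum>k<n. if k = m then L $$ (i, m) * D $$ (m, m) else 0)"
      using dg D m unfolding diagonal_mat_def by (intro sum.cong) auto
    also have "\<dots> = L $$ (i, m) * D $$ (m, m)" using m by (simp add: sum.delta')
    finally show ?thesis .
  qed
  have "(L * D * transpose_mat L) $$ (i, j) = (\<Sum>m<n. (L * D) $$ (i, m) * transpose_mat L $$ (m, j))"
    using mult_entry[OF LD _ i j, of "transpose_mat L"] L by simp
  also have "\<dots> = (\<Sum>m<n. L $$ (i, m) * D $$ (m, m) * L $$ (j, m))"
    using e1 L j by (intro sum.cong) auto
  finally show ?thesis .
qed

lemma jac_qf:
  assumes L: "(L::real mat) \<in> carrier_mat n n" and D: "D \<in> carrier_mat n n" and dg: "diagonal_mat D"
  shows "qf n (L * D * transpose_mat L) x = (\<Sum>m<n. D $$ (m, m) * (\<Sum>i<n. x i * L $$ (i, m))\<^sup>2)"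
proof -
  have "qf n (L * D * transpose_mat L) x = (\<Sum>i<n. \<Sum>j<n. \<Sum>m<n. D $$ (m, m) * ((x i * L $$ (i, m)) * (x j * L $$ (j, m))))"
    unfolding qf_def using jac_entry[OF L D dg]
    by (intro sum.cong refl) (simp add: sum_distrib_left sum_distrib_right algebra_simps)
  also have "\<dots> = (\<Sum>i<n. \<Sum>m<n. \<Sum>j<n. D $$ (m, m) * ((x i * L $$ (i, m)) * (x j * L $$ (j, m))))"
    by (rule sum.cong[OF refl], rule sum.swap)
  also have "\<dots> = (\<Sum>m<n. \<Sum>i<n. \<Sum>j<n. D $$ (m, m) * ((x i * L $$ (i, m)) * (x j * L $$ (j, m))))"
    by (rule sum.swap)
  also have "\<dots> = (\<Sum>m<n. D $$ (m, m) * (\<Sum>i<n. x i * L $$ (i, m))\<^sup>2)"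
  proof (rule sum.cong[OF refl])
    fix m
    have "(\<Sum>i<n. x i * L $$ (i, m))\<^sup>2 = (\<Sum>i<n. \<Sum>j<n. (x i * L $$ (i, m)) * (x j * L $$ (j, m)))"
      by (simp add: power2_eq_square sum_product)
    then show "(\<Sum>i<n. \<Sum>j<n. D $$ (m, m) * ((x i * L $$ (i, m)) * (x j * L $$ (j, m)))) = D $$ (m, m) * (\<Sum>i<n. x i * L $$ (i, m))\<^sup>2"
      by (simp add: sum_distrib_left)
  qed
  finally show ?thesis .
qed

lemma back_bound:
  fixes L :: "real mat" and x :: "nat \<Rightarrow> real"
  assumes d1: "\<forall>i<n. L $$ (i, i) = 1" and up: "\<forall>i j. i < j \<and> j < n \<longrightarrow> L $$ (i, j) = 0"
    and lb: "\<forall>i j. j < i \<and> i < n \<longrightarrow> \<bar>L $$ (i, j)\<bar> \<le> u" and u: "u \<ge> 0"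
  shows "k \<le> n \<Longrightarrow> (\<Sum>i\<in>{k..<n}. \<bar>x i\<bar>) \<le> (1 + u) ^ (n - k) * (\<Sum>i\<in>{k..<n}. \<bar>\<Sum>j<n. x j * L $$ (j, i)\<bar>)"
proof (induction "n - k" arbitrary: k)
  case 0
  then show ?case by simp
next
  case (Suc d)
  define y where "y = (\<lambda>i. \<Sum>j<n. x j * L $$ (j, i))"
  have kn: "k < n" using Suc by simp
  have IH: "(\<Sum>i\<in>{Suc k..<n}. \<bar>x i\<bar>) \<le> (1 + u) ^ (n - Suc k) * (\<Sum>i\<in>{Suc k..<n}. \<bar>y i\<bar>)"
    using Suc.hyps(1)[of "Suc k"] Suc.hyps(2) kn unfolding y_def by simp
  have split: "{..<n} = {..<k} \<union> insert k {Suc k..<n}" using kn by auto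
  have yk: "y k = x k + (\<Sum>j\<in>{Suc k..<n}. x j * L $$ (j, k))"
  proof -
    have "y k = (\<Sum>j\<in>{..<k}. x j * L $$ (j, k)) + (\<Sum>j\<in>insert k {Suc k..<n}. x j * L $$ (j, k))"
      unfolding y_def split by (subst sum.union_disjoint) auto
    also have "(\<Sum>j\<in>{..<k}. x j * L $$ (j, k)) = 0" using up kn by (intro sum.neutral) auto
    also have "(\<Sum>j\<in>insert k {Suc k..<n}. x j * L $$ (j, k)) = x k + (\<Sum>j\<in>{Suc k..<n}. x j * L $$ (j, k))"
      using d1 kn by simp
    finally show ?thesis by simp
  qed
  have "\<bar>\<Sum>j\<in>{Suc k..<n}. x j * L $$ (j, k)\<bar> \<le> (\<Sum>j\<in>{Suc k..<n}. \<bar>x j\<bar> * u)"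
    by (rule order_trans[OF sum_abs], rule sum_mono) (use lb kn in \<open>auto simp: abs_mult intro!: mult_left_mono\<close>)
  also have "\<dots> = u * (\<Sum>j\<in>{Suc k..<n}. \<bar>x j\<bar>)" by (simp add: sum_distrib_left mult.commute)
  finally have xk: "\<bar>x k\<bar> \<le> \<bar>y k\<bar> + u * (\<Sum>j\<in>{Suc k..<n}. \<bar>x j\<bar>)" using yk by linarith
  have ek: "{k..<n} = insert k {Suc k..<n}" using kn by auto
  have pw: "(1 + u) ^ (n - k) = (1 + u) * (1 + u) ^ (n - Suc k)" using kn
    by (metis Suc_diff_Suc power_Suc)
  have p1: "1 \<le> (1 + u) ^ (n - k)" using u by simp
  have sy: "0 \<le> (\<Sum>i\<in>{Suc k..<n}. \<bar>y i\<bar>)" by (auto intro: sum_nonneg)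
  have "(\<Sum>i\<in>{k..<n}. \<bar>x i\<bar>) = \<bar>x k\<bar> + (\<Sum>i\<in>{Suc k..<n}. \<bar>x i\<bar>)" unfolding ek by simp
  also have "\<dots> \<le> \<bar>y k\<bar> + (1 + u) * (\<Sum>i\<in>{Suc k..<n}. \<bar>x i\<bar>)" using xk by (simp add: algebra_simps)
  also have "\<dots> \<le> \<bar>y k\<bar> + (1 + u) * ((1 + u) ^ (n - Suc k) * (\<Sum>i\<in>{Suc k..<n}. \<bar>y i\<bar>))"
    using IH u by (simp add: mult_left_mono)
  also have "\<dots> = \<bar>y k\<bar> + (1 + u) ^ (n - k) * (\<Sum>i\<in>{Suc k..<n}. \<bar>y i\<bar>)" using pw by simp
  also have "\<dots> \<le> (1 + u) ^ (n - k) * \<bar>y k\<bar> + (1 + u) ^ (n - k) * (\<Sum>i\<in>{Suc k..<n}. \<bar>y i\<bar>)"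
    using p1 by (simp add: mult_right_mono[of 1 _ "\<bar>y k\<bar>", simplified])
  also have "\<dots> = (1 + u) ^ (n - k) * (\<Sum>i\<in>{k..<n}. \<bar>y i\<bar>)" unfolding ek by (simp add: algebra_simps)
  finally show ?case unfolding y_def .
qed

lemma jac_d_low:
  fixes D :: "real mat"
  assumes u: "u > 0" and d0: "0 < n \<longrightarrow> 1 < u * D $$ (0, 0)"
    and ds: "\<forall>i. Suc i < n \<longrightarrow> D $$ (i, i) < u * D $$ (Suc i, Suc i)"
  shows "m < n \<Longrightarrow> D $$ (m, m) > 1 / u ^ Suc m"
proof (induction m)
  case 0
  then show ?case using d0 u by (simp add: field_simps)
next
  case (Suc m)
  then have "D $$ (m, m) > 1 / u ^ Suc m" by simp
  moreover have "D $$ (m, m) < u * D $$ (Suc m, Suc m)" using ds Suc.prems by auto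
  ultimately have "1 / u ^ Suc m < u * D $$ (Suc m, Suc m)" by simp
  then show ?case using u by (simp add: field_simps)
qed

lemma jac_lower:
  assumes u: "u > 0"
  shows "\<exists>c>0. \<forall>t. jacobi_siegel n u t \<longrightarrow> (\<forall>x. qf n t x \<ge> c * nsq n x)"
proof -
  define U where "U = max 1 u"
  define dl where "dl = 1 / U ^ n"
  define ka where "ka = (1 + u) ^ (2 * n) * (real n + 1)"
  have U1: "U \<ge> 1" "U \<ge> u" unfolding U_def by auto
  have dl0: "dl > 0" unfolding dl_def using U1 by simp
  have ka0: "ka > 0" unfolding ka_def using u by simp
  have "\<forall>t. jacobi_siegel n u t \<longrightarrow> (\<forall>x. qf n t x \<ge> (dl / ka) * nsq n x)"
  proof (intro allI impI)
    fix t x assume "jacobi_siegel n u t"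
    then obtain L D where L: "L \<in> carrier_mat n n" and D: "D \<in> carrier_mat n n"
      and d1: "\<forall>i<n. L $$ (i, i) = 1" and up: "\<forall>i j. i < j \<and> j < n \<longrightarrow> L $$ (i, j) = 0"
      and dg: "diagonal_mat D" and te: "t = L * D * transpose_mat L"
      and lb: "\<forall>i j. j < i \<and> i < n \<longrightarrow> \<bar>L $$ (i, j)\<bar> < u"
      and d0: "0 < n \<longrightarrow> 1 < u * D $$ (0, 0)"
      and ds: "\<forall>i. Suc i < n \<longrightarrow> D $$ (i, i) < u * D $$ (Suc i, Suc i)"
      unfolding jacobi_siegel_def by blast
    define y where "y = (\<lambda>m. \<Sum>i<n. x i * L $$ (i, m))"
    have dm: "D $$ (m, m) \<ge> dl" if m: "m < n" for m
    proof -
      have "D $$ (m, m) > 1 / u ^ Suc m" using jac_d_low[OF u d0 ds m] .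
      moreover have "1 / u ^ Suc m \<ge> 1 / U ^ Suc m" using U1 u
        by (intro divide_left_mono power_mono) auto
      moreover have "U ^ Suc m \<le> U ^ n" using U1 m by (intro power_increasing) auto
      then have "1 / U ^ Suc m \<ge> 1 / U ^ n" using U1
        by (intro divide_left_mono) auto
      ultimately show ?thesis unfolding dl_def by linarith
    qed
    have "qf n t x = (\<Sum>m<n. D $$ (m, m) * (y m)\<^sup>2)" unfolding te y_def by (rule jac_qf[OF L D dg])
    also have "\<dots> \<ge> (\<Sum>m<n. dl * (y m)\<^sup>2)" using dm by (intro sum_mono mult_right_mono) auto
    finally have q1: "qf n t x \<ge> dl * nsq n y" unfolding nsq_def by (simp add: sum_distrib_left)
    have lb': "\<forall>i j. j < i \<and> i < n \<longrightarrow> \<bar>L $$ (i, j)\<bar> \<le> u" using lb by (meson less_imp_le)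
    have bb: "(\<Sum>i\<in>{0..<n}. \<bar>x i\<bar>) \<le> (1 + u) ^ n * (\<Sum>i\<in>{0..<n}. \<bar>y i\<bar>)"
      using back_bound[OF d1 up lb', of 0 x] u unfolding y_def by simp
    have "nsq n x = (\<Sum>i\<in>{0..<n}. \<bar>x i\<bar>\<^sup>2)" unfolding nsq_def by (simp add: atLeast0LessThan)
    also have "\<dots> \<le> (\<Sum>i\<in>{0..<n}. \<bar>x i\<bar>)\<^sup>2" by (rule sq_sum_ge) auto
    also have "\<dots> \<le> ((1 + u) ^ n * (\<Sum>i\<in>{0..<n}. \<bar>y i\<bar>))\<^sup>2"
      using bb by (intro power_mono) (auto intro: sum_nonneg)
    also have "\<dots> = (1 + u) ^ (2 * n) * (\<Sum>i\<in>{0..<n}. \<bar>y i\<bar>)\<^sup>2"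
      by (simp add: power_mult_distrib power_mult[symmetric] mult.commute)
    also have "(\<Sum>i\<in>{0..<n}. \<bar>y i\<bar>)\<^sup>2 \<le> real n * (\<Sum>i\<in>{0..<n}. \<bar>y i\<bar>\<^sup>2)"
      using sq_sum_le[of "{0..<n}" "\<lambda>i. \<bar>y i\<bar>"] by simp
    also have "(\<Sum>i\<in>{0..<n}. \<bar>y i\<bar>\<^sup>2) = nsq n y" unfolding nsq_def by (simp add: atLeast0LessThan)
    finally have "nsq n x \<le> (1 + u) ^ (2 * n) * (real n * nsq n y)" using u by (simp add: mult_left_mono)
    also have "\<dots> \<le> ka * nsq n y" unfolding ka_def using u nsq_nonneg[of n y]
      by (simp add: mult_right_mono mult.assoc)
    finally have "nsq n x \<le> ka * nsq n y" .
    then have "dl / ka * nsq n x \<le> dl * nsq n y" using ka0 dl0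
      by (simp add: field_simps)
    then show "qf n t x \<ge> dl / ka * nsq n x" using q1 by linarith
  qed
  then show ?thesis using dl0 ka0 by (intro exI[of _ "dl / ka"]) auto
qed

lemma tr_lower:
  fixes G Q T L D :: "real mat"
  assumes G: "G \<in> carrier_mat m n" and Q: "Q \<in> carrier_mat m m" and Qs: "symm m Q"
    and Qa: "\<And>x. qf m Q x \<ge> a * nsq m x" and a: "a \<ge> 0"
    and L: "L \<in> carrier_mat n n" and D: "D \<in> carrier_mat n n" and dg: "diagonal_mat D"
    and Dp: "\<And>k. k < n \<Longrightarrow> D $$ (k, k) \<ge> 0"
    and Te: "T = L * D * transpose_mat L"
    and Tb: "\<And>y. qf n T y \<ge> b * nsq n y"
  shows "mtrace (G * T * transpose_mat G * Q) \<ge> a * b * frob2 G"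
proof -
  define H where "H = G * L"
  have H: "H \<in> carrier_mat m n" unfolding H_def using G L by simp
  have "G * T * transpose_mat G = H * D * transpose_mat H"
  proof -
    have "G * T * transpose_mat G = G * (L * D * transpose_mat L) * transpose_mat G" unfolding Te ..
    also have "\<dots> = (G * L) * D * (transpose_mat L * transpose_mat G)"
    proof -
      have Lt: "transpose_mat L \<in> carrier_mat n n" and Gt: "transpose_mat G \<in> carrier_mat n m" using L G by auto
      have LD: "L * D \<in> carrier_mat n n" using L D by auto
      have GL: "G * L \<in> carrier_mat m n" using L G by auto
      have "G * (L * D * transpose_mat L) = G * (L * D) * transpose_mat L"
        using assoc_mult_mat[OF G LD Lt] by simp
      also have "G * (L * D) = G * L * D" using assoc_mult_mat[OF G L D] by simp
      finally have "G * (L * D * transpose_mat L) * transpose_mat G = G * L * D * transpose_mat L * transpose_mat G" by simp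
      also have "\<dots> = G * L * D * (transpose_mat L * transpose_mat G)"
        using assoc_mult_mat[OF mult_carrier_mat[OF GL D] Lt Gt] .
      finally show ?thesis .
    qed
    also have "transpose_mat L * transpose_mat G = transpose_mat (G * L)"
      using transpose_mult[OF G L] by simp
    finally show ?thesis unfolding H_def .
  qed
  then have GT: "G * T * transpose_mat G * Q = H * D * transpose_mat H * Q" by simp
  have HDH: "H * D * transpose_mat H \<in> carrier_mat m m" using H D by simp
  have ent: "(H * D * transpose_mat H) $$ (i, j) = (\<Sum>p<n. H $$ (i, p) * D $$ (p, p) * H $$ (j, p))"
    if "i < m" "j < m" for i j using jac_entry[OF H D dg that] .
  have "mtrace (G * T * transpose_mat G * Q) = (\<Sum>i<m. \<Sum>j<m. (H * D * transpose_mat H) $$ (i, j) * Q $$ (j, i))"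
    unfolding GT mtrace_def using HDH Q by (auto intro!: sum.cong simp: mult_entry[OF HDH Q])
  also have "\<dots> = (\<Sum>i<m. \<Sum>j<m. \<Sum>p<n. D $$ (p, p) * (H $$ (i, p) * Q $$ (i, j) * H $$ (j, p)))"
    using ent Qs unfolding symm_def by (intro sum.cong refl) (auto simp: sum_distrib_right sum_distrib_left algebra_simps)
  also have "\<dots> = (\<Sum>i<m. \<Sum>p<n. \<Sum>j<m. D $$ (p, p) * (H $$ (i, p) * Q $$ (i, j) * H $$ (j, p)))"
    by (rule sum.cong[OF refl], rule sum.swap)
  also have "\<dots> = (\<Sum>p<n. \<Sum>i<m. \<Sum>j<m. D $$ (p, p) * (H $$ (i, p) * Q $$ (i, j) * H $$ (j, p)))"
    by (rule sum.swap)
  also have "\<dots> = (\<Sum>p<n. D $$ (p, p) * qf m Q (\<lambda>i. H $$ (i, p)))"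
    unfolding qf_def by (simp add: sum_distrib_left)
  also have "\<dots> \<ge> (\<Sum>p<n. D $$ (p, p) * (a * nsq m (\<lambda>i. H $$ (i, p))))"
    using Dp Qa by (intro sum_mono mult_left_mono) auto
  finally have s1: "mtrace (G * T * transpose_mat G * Q) \<ge> (\<Sum>p<n. D $$ (p, p) * (a * nsq m (\<lambda>i. H $$ (i, p))))" .
  have "(\<Sum>p<n. D $$ (p, p) * (a * nsq m (\<lambda>i. H $$ (i, p)))) = a * (\<Sum>i<m. \<Sum>p<n. D $$ (p, p) * (H $$ (i, p))\<^sup>2)"
    unfolding nsq_def by (simp add: sum_distrib_left algebra_simps sum.swap[of _ "{..<n}" "{..<m}"])
  also have "(\<Sum>i<m. \<Sum>p<n. D $$ (p, p) * (H $$ (i, p))\<^sup>2) = (\<Sum>i<m. qf n T (\<lambda>k. G $$ (i, k)))"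
  proof (rule sum.cong[OF refl])
    fix i assume i: "i \<in> {..<m}"
    have "qf n T (\<lambda>k. G $$ (i, k)) = (\<Sum>p<n. D $$ (p, p) * (\<Sum>k<n. G $$ (i, k) * L $$ (k, p))\<^sup>2)"
      unfolding Te by (rule jac_qf[OF L D dg])
    also have "\<dots> = (\<Sum>p<n. D $$ (p, p) * (H $$ (i, p))\<^sup>2)"
      unfolding H_def using i mult_entry[OF G L] by (intro sum.cong refl) auto
    finally show "(\<Sum>p<n. D $$ (p, p) * (H $$ (i, p))\<^sup>2) = qf n T (\<lambda>k. G $$ (i, k))" by simp
  qed
  also have "a * (\<Sum>i<m. qf n T (\<lambda>k. G $$ (i, k))) \<ge> a * (\<Sum>i<m. b * nsq n (\<lambda>k. G $$ (i, k)))"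
    using Tb a by (intro mult_left_mono sum_mono) auto
  also have "a * (\<Sum>i<m. b * nsq n (\<lambda>k. G $$ (i, k))) = a * b * frob2 G"
    unfolding frob2_def nsq_def using G by (simp add: sum_distrib_left mult.assoc)
  finally show ?thesis using s1 by linarith
qed

definition Emat :: "nat \<Rightarrow> nat \<Rightarrow> real mat \<Rightarrow> real mat" where
  "Emat n1 n2 A = four_block_mat (1\<^sub>m n1) A (0\<^sub>m n2 n1) (1\<^sub>m n2)"

lemma Emat_carrier: "A \<in> carrier_mat n1 n2 \<Longrightarrow> Emat n1 n2 A \<in> carrier_mat (n1 + n2) (n1 + n2)"
  unfolding Emat_def by simp

lemma Emat_t: assumes "A \<in> carrier_mat n1 n2"
  shows "transpose_mat (Emat n1 n2 A) = four_block_mat (1\<^sub>m n1) (0\<^sub>m n1 n2) (transpose_mat A) (1\<^sub>m n2)"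
  unfolding Emat_def using assms by (subst transpose_four_block_mat) auto

lemma block_factor:
  fixes Y1 P Y3 Y2 t :: "real mat"
  assumes Y1: "Y1 \<in> carrier_mat n1 n1" and P: "P \<in> carrier_mat n1 n1" and YP: "Y1 * P = 1\<^sub>m n1"
    and Ps: "transpose_mat P = P" and Y3: "Y3 \<in> carrier_mat n1 n2" and Y2: "Y2 \<in> carrier_mat n2 n2"
    and t: "t = Y2 - transpose_mat Y3 * P * Y3"
  shows "four_block_mat Y1 Y3 (transpose_mat Y3) Y2 =
    transpose_mat (Emat n1 n2 (P * Y3)) * four_block_mat Y1 (0\<^sub>m n1 n2) (0\<^sub>m n2 n1) t * Emat n1 n2 (P * Y3)"
proof -
  define A where "A = P * Y3"
  have A: "A \<in> carrier_mat n1 n2" unfolding A_def using P Y3 by simp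
  have tc: "t \<in> carrier_mat n2 n2" unfolding t using Y2 Y3 P by (simp add: minus_carrier_mat)
  have PY: "P * Y1 = 1\<^sub>m n1" using mat_mult_left_right_inverse[OF Y1 P YP] .
  have At: "transpose_mat A = transpose_mat Y3 * P" unfolding A_def using transpose_mult[OF P Y3] Ps by simp
  have e1: "Y1 * A = Y3" unfolding A_def using assoc_mult_mat[OF Y1 P Y3, symmetric] YP Y3 by simp
  have e2: "transpose_mat A * Y1 = transpose_mat Y3" unfolding At
    using assoc_mult_mat[OF transpose_carrier_mat[THEN iffD2, OF Y3] P Y1] PY Y3 by simp
  have e3: "transpose_mat Y3 * A = transpose_mat Y3 * P * Y3" unfolding A_def
    using assoc_mult_mat[OF transpose_carrier_mat[THEN iffD2, OF Y3] P Y3] by simp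
  have e4: "transpose_mat Y3 * P * Y3 + t = Y2" unfolding t
    by (rule eq_matI) (use Y2 Y3 P in auto)
  have "transpose_mat (Emat n1 n2 A) * four_block_mat Y1 (0\<^sub>m n1 n2) (0\<^sub>m n2 n1) t
      = four_block_mat Y1 (0\<^sub>m n1 n2) (transpose_mat A * Y1) t"
    unfolding Emat_t[OF A] using Y1 A tc
    by (subst mult_four_block_mat[of _ n1 n1 _ n2 _ n2 _ _ n1 _ n2]) auto
  also have "\<dots> * Emat n1 n2 A = four_block_mat Y1 (Y1 * A) (transpose_mat A * Y1) (transpose_mat A * Y1 * A + t)"
    unfolding Emat_def using Y1 A tc
    by (subst mult_four_block_mat[of _ n1 n1 _ n2 _ n2 _ _ n1 _ n2]) auto
  also have "\<dots> = four_block_mat Y1 Y3 (transpose_mat Y3) Y2"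
    using e1 e2 e3 e4 by simp
  finally show ?thesis unfolding A_def by simp
qed

lemma block_factor_V:
  fixes V3 V2 A C :: "real mat"
  assumes V3: "V3 \<in> carrier_mat n1 n2" and A: "A \<in> carrier_mat n1 n2" and C: "C \<in> carrier_mat n2 n2"
  shows "four_block_mat (0\<^sub>m n1 n1) V3 (transpose_mat V3) (transpose_mat V3 * A + transpose_mat A * V3 + C) =
    transpose_mat (Emat n1 n2 A) * four_block_mat (0\<^sub>m n1 n1) V3 (transpose_mat V3) C * Emat n1 n2 A"
proof -
  have "transpose_mat (Emat n1 n2 A) * four_block_mat (0\<^sub>m n1 n1) V3 (transpose_mat V3) C
      = four_block_mat (0\<^sub>m n1 n1) V3 (transpose_mat V3) (transpose_mat A * V3 + C)"
    unfolding Emat_t[OF A] using V3 A C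
    by (subst mult_four_block_mat[of _ n1 n1 _ n2 _ n2 _ _ n1 _ n2]) auto
  also have "\<dots> * Emat n1 n2 A = four_block_mat (0\<^sub>m n1 n1) V3 (transpose_mat V3) (transpose_mat V3 * A + (transpose_mat A * V3 + C))"
    unfolding Emat_def using V3 A C
    by (subst mult_four_block_mat[of _ n1 n1 _ n2 _ n2 _ _ n1 _ n2]) auto
  finally show ?thesis using V3 A C assoc_add_mat[of "transpose_mat V3 * A" n2 n2 "transpose_mat A * V3" C] by simp
qed

lemma sum_split_add: fixes a b :: nat shows "(\<Sum>i<a + b. f i) = (\<Sum>i<a. f i) + (\<Sum>i<b. f (a + i))"
  by (induction b) (auto simp: add.assoc)

lemma mtrace_fb: assumes "A \<in> carrier_mat n1 n1" "D \<in> carrier_mat n2 n2"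
  shows "mtrace (four_block_mat A B C D) = mtrace A + mtrace D"
  unfolding mtrace_def using assms by (simp add: sum_split_add)

lemma mtrace_add: assumes "A \<in> carrier_mat n n" "B \<in> carrier_mat n n"
  shows "mtrace (A + B) = mtrace A + mtrace B"
  unfolding mtrace_def using assms by (simp add: sum.distrib)

lemma mtrace_add_dim: assumes "dim_row A = n" "dim_col A = n" "dim_row B = n" "dim_col B = n"
  shows "mtrace (A + B) = mtrace A + mtrace B"
  unfolding mtrace_def using assms by (simp add: sum.distrib)

lemma mtrace_cyc: assumes A: "(A::real mat) \<in> carrier_mat m n" and B: "B \<in> carrier_mat n m"
  shows "mtrace (A * B) = mtrace (B * A)"
proof -
  have "mtrace (A * B) = (\<Sum>i<m. \<Sum>j<n. A $$ (i, j) * B $$ (j, i))"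
    unfolding mtrace_def using A B mult_entry[OF A B] by simp
  also have "\<dots> = (\<Sum>j<n. \<Sum>i<m. B $$ (j, i) * A $$ (i, j))"
    by (subst sum.swap) (simp add: mult.commute)
  also have "\<dots> = mtrace (B * A)"
    unfolding mtrace_def using A B mult_entry[OF B A] by simp
  finally show ?thesis .
qed

lemma frob2_t: "frob2 (transpose_mat A) = frob2 A"
  unfolding frob2_def by (simp, subst sum.swap, simp)

lemma tr_ab: assumes A: "(A::real mat) \<in> carrier_mat m n" and B: "B \<in> carrier_mat m n" and s: "s > 0"
  shows "2 * mtrace (A * transpose_mat B) \<le> s * frob2 A + frob2 B / s"
proof -
  have Bt: "transpose_mat B \<in> carrier_mat n m" using B by simp
  have "mtrace (A * transpose_mat B) = (\<Sum>i<m. \<Sum>j<n. A $$ (i, j) * B $$ (i, j))"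
    unfolding mtrace_def using A B mult_entry[OF A Bt] by simp
  then have "2 * mtrace (A * transpose_mat B) = (\<Sum>i<m. \<Sum>j<n. 2 * (A $$ (i, j) * B $$ (i, j)))"
    by (simp add: sum_distrib_left)
  also have "\<dots> \<le> (\<Sum>i<m. \<Sum>j<n. s * (A $$ (i, j))\<^sup>2 + (B $$ (i, j))\<^sup>2 / s)"
  proof (intro sum_mono)
    fix i j
    have "0 \<le> (s * A $$ (i, j) - B $$ (i, j))\<^sup>2 / s" using s by simp
    also have "(s * A $$ (i, j) - B $$ (i, j))\<^sup>2 / s = s * (A $$ (i, j))\<^sup>2 + (B $$ (i, j))\<^sup>2 / s - 2 * (A $$ (i, j) * B $$ (i, j))"
      using s by (simp add: power2_diff field_simps power2_eq_square)
    finally show "2 * (A $$ (i, j) * B $$ (i, j)) \<le> s * (A $$ (i, j))\<^sup>2 + (B $$ (i, j))\<^sup>2 / s" by simp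
  qed
  also have "\<dots> = s * frob2 A + frob2 B / s"
    unfolding frob2_def using A B by (simp add: sum.distrib sum_distrib_left sum_divide_distrib)
  finally show ?thesis .
qed

lemma blk_carrier: assumes "A \<in> carrier_mat (n1 + n2) (n1 + n2)"
  shows "blk1 n1 A \<in> carrier_mat n1 n1" "blk3 n1 A \<in> carrier_mat n1 n2" "blk2 n1 A \<in> carrier_mat n2 n2"
  using assms unfolding blk1_def blk2_def blk3_def by auto

lemma blk_decomp: assumes A: "A \<in> carrier_mat (n1 + n2) (n1 + n2)" and s: "transpose_mat A = A"
  shows "A = four_block_mat (blk1 n1 A) (blk3 n1 A) (transpose_mat (blk3 n1 A)) (blk2 n1 A)"
proof (rule eq_matI)
  have s': "A $$ (i, j) = A $$ (j, i)" if "i < n1 + n2" "j < n1 + n2" for i j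
    using s that A by (metis carrier_matD index_transpose_mat(1))
  fix i j assume i: "i < dim_row (four_block_mat (blk1 n1 A) (blk3 n1 A) (transpose_mat (blk3 n1 A)) (blk2 n1 A))"
    and j: "j < dim_col (four_block_mat (blk1 n1 A) (blk3 n1 A) (transpose_mat (blk3 n1 A)) (blk2 n1 A))"
  then have i': "i < n1 + n2" and j': "j < n1 + n2" using A unfolding blk1_def blk2_def blk3_def by auto
  show "A $$ (i, j) = four_block_mat (blk1 n1 A) (blk3 n1 A) (transpose_mat (blk3 n1 A)) (blk2 n1 A) $$ (i, j)"
    using A i' j' s'[of i j] unfolding blk1_def blk2_def blk3_def by auto
qed (use A in \<open>auto simp: blk1_def blk2_def blk3_def\<close>)

lemma blk_sym: assumes A: "A \<in> carrier_mat (n1 + n2) (n1 + n2)" and s: "transpose_mat A = A"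
  shows "transpose_mat (blk1 n1 A) = blk1 n1 A" "transpose_mat (blk2 n1 A) = blk2 n1 A"
proof -
  have s': "A $$ (i, j) = A $$ (j, i)" if "i < n1 + n2" "j < n1 + n2" for i j
    using s that A by (metis carrier_matD index_transpose_mat(1))
  show "transpose_mat (blk1 n1 A) = blk1 n1 A" unfolding blk1_def using s' by (intro eq_matI) auto
  show "transpose_mat (blk2 n1 A) = blk2 n1 A" unfolding blk2_def using s' A by (intro eq_matI) auto
qed

lemma arith7: fixes T1 T2 T3 T4 p q x y z v c :: real
  assumes "T1 \<ge> 0" "p \<le> T2" "p \<le> T3" "q \<le> T4" "2 * x \<le> p + v" "2 * y \<le> p + v" "2 * z \<le> q + c"
  shows "2 * (x + y + z) - (T1 + T2 + (T3 + T4)) \<le> v + v + c"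
  using assms by (simp add: algebra_simps)

lemma core_bound:
  fixes Y1 t K V3 C L1 D1 L2 D2 :: "real mat"
  assumes Y1: "Y1 \<in> carrier_mat n1 n1" and Y1s: "symm n1 Y1" and Y1f: "Y1 = L1 * D1 * transpose_mat L1"
    and L1: "L1 \<in> carrier_mat n1 n1" and D1: "D1 \<in> carrier_mat n1 n1" and D1d: "diagonal_mat D1"
    and D1p: "\<And>k. k < n1 \<Longrightarrow> D1 $$ (k, k) \<ge> 0"
    and Y1a: "\<And>x. qf n1 Y1 x \<ge> a * nsq n1 x" and a: "a > 0"
    and t: "t \<in> carrier_mat n2 n2" and ts: "symm n2 t" and tf: "t = L2 * D2 * transpose_mat L2"
    and L2: "L2 \<in> carrier_mat n2 n2" and D2: "D2 \<in> carrier_mat n2 n2" and D2d: "diagonal_mat D2"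
    and D2p: "\<And>k. k < n2 \<Longrightarrow> D2 $$ (k, k) \<ge> 0"
    and tl: "\<And>x. qf n2 t x \<ge> lam * nsq n2 x" and lam: "lam > 0"
    and K: "K \<in> carrier_mat (n1 + n2) (n1 + n2)" and Ks: "transpose_mat K = K"
    and V3: "V3 \<in> carrier_mat n1 n2" and C: "C \<in> carrier_mat n2 n2"
  shows "2 * mtrace (K * four_block_mat (0\<^sub>m n1 n1) V3 (transpose_mat V3) C)
    - mtrace ((K * four_block_mat Y1 (0\<^sub>m n1 n2) (0\<^sub>m n2 n1) t) * (K * four_block_mat Y1 (0\<^sub>m n1 n2) (0\<^sub>m n2 n1) t))
    \<le> 2 * frob2 V3 / (a * lam) + frob2 C / lam\<^sup>2"
proof -
  define K1 where "K1 = blk1 n1 K"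
  define K3 where "K3 = blk3 n1 K"
  define K2 where "K2 = blk2 n1 K"
  have K1: "K1 \<in> carrier_mat n1 n1" and K3: "K3 \<in> carrier_mat n1 n2" and K2: "K2 \<in> carrier_mat n2 n2"
    unfolding K1_def K2_def K3_def using blk_carrier[OF K] by auto
  have K3t: "transpose_mat K3 \<in> carrier_mat n2 n1" using K3 by simp
  have Kd: "K = four_block_mat K1 K3 (transpose_mat K3) K2" unfolding K1_def K2_def K3_def by (rule blk_decomp[OF K Ks])
  have K1s: "transpose_mat K1 = K1" and K2s: "transpose_mat K2 = K2" unfolding K1_def K2_def using blk_sym[OF K Ks] by auto
  have V3t: "transpose_mat V3 \<in> carrier_mat n2 n1" using V3 by simp
  have KW: "K * four_block_mat (0\<^sub>m n1 n1) V3 (transpose_mat V3) C =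
     four_block_mat (K3 * transpose_mat V3) (K1 * V3 + K3 * C) (K2 * transpose_mat V3) (transpose_mat K3 * V3 + K2 * C)"
    unfolding Kd using K1 K3 K2 V3 C
    by (subst mult_four_block_mat[of _ n1 n1 _ n2 _ n2 _ _ n1 _ n2]) auto
  have trKW: "mtrace (K * four_block_mat (0\<^sub>m n1 n1) V3 (transpose_mat V3) C) =
      mtrace (K3 * transpose_mat V3) + mtrace (transpose_mat K3 * transpose_mat (transpose_mat V3)) + mtrace (K2 * transpose_mat (transpose_mat C))"
    unfolding KW using K1 K3 K2 V3 C
    by (subst mtrace_fb[of _ n1 _ n2]) (auto simp: mtrace_add_dim[of _ n2])
  have KD: "K * four_block_mat Y1 (0\<^sub>m n1 n2) (0\<^sub>m n2 n1) t =
     four_block_mat (K1 * Y1) (K3 * t) (transpose_mat K3 * Y1) (K2 * t)"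
    unfolding Kd using K1 K3 K2 Y1 t
    by (subst mult_four_block_mat[of _ n1 n1 _ n2 _ n2 _ _ n1 _ n2]) auto
  have KDKD: "(K * four_block_mat Y1 (0\<^sub>m n1 n2) (0\<^sub>m n2 n1) t) * (K * four_block_mat Y1 (0\<^sub>m n1 n2) (0\<^sub>m n2 n1) t) =
     four_block_mat (K1 * Y1 * (K1 * Y1) + K3 * t * (transpose_mat K3 * Y1)) (K1 * Y1 * (K3 * t) + K3 * t * (K2 * t))
       (transpose_mat K3 * Y1 * (K1 * Y1) + K2 * t * (transpose_mat K3 * Y1)) (transpose_mat K3 * Y1 * (K3 * t) + K2 * t * (K2 * t))"
    unfolding KD using K1 K3 K2 Y1 t
    by (subst mult_four_block_mat[of _ n1 n1 _ n2 _ n2 _ _ n1 _ n2]) auto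
  have as: "X * T * (Gt * Q) = X * T * Gt * Q" if "X \<in> carrier_mat p q" "T \<in> carrier_mat q q" "Gt \<in> carrier_mat q p" "Q \<in> carrier_mat p p"
    for X T Gt Q :: "real mat" and p q
    using assoc_mult_mat[OF mult_carrier_mat[OF that(1,2)] that(3,4)] by simp
  have c11: "K1 * Y1 * transpose_mat K1 * Y1 \<in> carrier_mat n1 n1" using K1 Y1 by (metis mult_carrier_mat transpose_carrier_mat)
  have c12: "K3 * t * transpose_mat K3 * Y1 \<in> carrier_mat n1 n1" using K3 t Y1 by (metis mult_carrier_mat transpose_carrier_mat)
  have c21: "transpose_mat K3 * Y1 * transpose_mat (transpose_mat K3) * t \<in> carrier_mat n2 n2" using K3 t Y1 by (metis mult_carrier_mat transpose_carrier_mat)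
  have c22: "K2 * t * transpose_mat K2 * t \<in> carrier_mat n2 n2" using K2 t by (metis mult_carrier_mat transpose_carrier_mat)
  have q1: "K1 * Y1 * (K1 * Y1) = K1 * Y1 * transpose_mat K1 * Y1"
    using as[OF _ Y1 _ Y1, of K1 K1] K1 K1s by simp
  have q2: "K3 * t * (transpose_mat K3 * Y1) = K3 * t * transpose_mat K3 * Y1"
    using as[OF K3 t K3t Y1] .
  have q3: "transpose_mat K3 * Y1 * (K3 * t) = transpose_mat K3 * Y1 * transpose_mat (transpose_mat K3) * t"
    using as[OF K3t Y1 _ t, of K3] K3 by simp
  have q4: "K2 * t * (K2 * t) = K2 * t * transpose_mat K2 * t"
    using as[OF K2 t _ t, of K2] K2 K2s by simp
  have trKD: "mtrace ((K * four_block_mat Y1 (0\<^sub>m n1 n2) (0\<^sub>m n2 n1) t) * (K * four_block_mat Y1 (0\<^sub>m n1 n2) (0\<^sub>m n2 n1) t)) =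
     mtrace (K1 * Y1 * transpose_mat K1 * Y1) + mtrace (K3 * t * transpose_mat K3 * Y1)
     + (mtrace (transpose_mat K3 * Y1 * transpose_mat (transpose_mat K3) * t) + mtrace (K2 * t * transpose_mat K2 * t))"
    unfolding KDKD q1 q2 q3 q4
    by (subst mtrace_fb[of _ n1 _ n2]) (use c11 c12 c21 c22 in \<open>auto simp del: assoc_mult_mat simp: mtrace_add\<close>)
  have Y1p: "qf n1 Y1 x \<ge> 0 * nsq n1 x" for x
  proof -
    have "a * nsq n1 x \<ge> 0" using a nsq_nonneg[of n1 x] by simp
    then show ?thesis using Y1a[of x] by simp
  qed
  have T1: "mtrace (K1 * Y1 * transpose_mat K1 * Y1) \<ge> 0 * a * frob2 K1"
    by (rule tr_lower[OF K1 Y1 Y1s Y1p _ L1 D1 D1d D1p Y1f]) (use Y1a in auto)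
  have T2: "mtrace (K3 * t * transpose_mat K3 * Y1) \<ge> a * lam * frob2 K3"
    by (rule tr_lower[OF K3 Y1 Y1s Y1a _ L2 D2 D2d D2p tf tl]) (use a in auto)
  have T3: "mtrace (transpose_mat K3 * Y1 * transpose_mat (transpose_mat K3) * t) \<ge> lam * a * frob2 (transpose_mat K3)"
    by (rule tr_lower[OF K3t t ts tl _ L1 D1 D1d D1p Y1f Y1a]) (use lam in auto)
  have T4: "mtrace (K2 * t * transpose_mat K2 * t) \<ge> lam * lam * frob2 K2"
    by (rule tr_lower[OF K2 t ts tl _ L2 D2 D2d D2p tf tl]) (use lam in auto)
  have al: "a * lam > 0" using a lam by simp
  have l2: "lam\<^sup>2 > 0" using lam by simp
  have B1: "2 * mtrace (K3 * transpose_mat V3) \<le> (a * lam) * frob2 K3 + frob2 V3 / (a * lam)"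
    by (rule tr_ab[OF K3 V3 al])
  have B2: "2 * mtrace (transpose_mat K3 * transpose_mat (transpose_mat V3)) \<le> (a * lam) * frob2 (transpose_mat K3) + frob2 (transpose_mat V3) / (a * lam)"
    by (rule tr_ab[OF K3t V3t al])
  have B3: "2 * mtrace (K2 * transpose_mat (transpose_mat C)) \<le> lam\<^sup>2 * frob2 K2 + frob2 (transpose_mat C) / lam\<^sup>2"
    by (rule tr_ab[OF K2 _ l2]) (use C in simp)
  have T3': "mtrace (transpose_mat K3 * Y1 * transpose_mat (transpose_mat K3) * t) \<ge> a * lam * frob2 K3"
    using T3 by (simp add: frob2_t mult.commute)
  have T4': "mtrace (K2 * t * transpose_mat K2 * t) \<ge> lam\<^sup>2 * frob2 K2"
    using T4 by (simp add: power2_eq_square)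
  have T1': "mtrace (K1 * Y1 * transpose_mat K1 * Y1) \<ge> 0" using T1 by simp
  have B2': "2 * mtrace (transpose_mat K3 * transpose_mat (transpose_mat V3)) \<le> (a * lam) * frob2 K3 + frob2 V3 / (a * lam)"
    using B2 by (simp only: frob2_t)
  have B3': "2 * mtrace (K2 * transpose_mat (transpose_mat C)) \<le> lam\<^sup>2 * frob2 K2 + frob2 C / lam\<^sup>2"
    using B3 by (simp only: frob2_t)
  have e2: "2 * frob2 V3 / (a * lam) = frob2 V3 / (a * lam) + frob2 V3 / (a * lam)" by simp
  show ?thesis unfolding trKW trKD e2 by (rule arith7[OF T1' T2 T3' T4' B1 B2' B3'])
qed

lemma phi_bound:
  fixes Y1 t L1 D1 L2 D2 A Y Z V V3 C :: "real mat"
  assumes Y1: "Y1 \<in> carrier_mat n1 n1" and Y1s: "symm n1 Y1" and Y1f: "Y1 = L1 * D1 * transpose_mat L1"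
    and L1: "L1 \<in> carrier_mat n1 n1" and D1: "D1 \<in> carrier_mat n1 n1" and D1d: "diagonal_mat D1"
    and D1p: "\<And>k. k < n1 \<Longrightarrow> D1 $$ (k, k) \<ge> 0"
    and Y1a: "\<And>x. qf n1 Y1 x \<ge> a * nsq n1 x" and a: "a > 0"
    and t: "t \<in> carrier_mat n2 n2" and ts: "symm n2 t" and tf: "t = L2 * D2 * transpose_mat L2"
    and L2: "L2 \<in> carrier_mat n2 n2" and D2: "D2 \<in> carrier_mat n2 n2" and D2d: "diagonal_mat D2"
    and D2p: "\<And>k. k < n2 \<Longrightarrow> D2 $$ (k, k) \<ge> 0"
    and tl: "\<And>x. qf n2 t x \<ge> lam * nsq n2 x" and lam: "lam > 0"
    and A: "A \<in> carrier_mat n1 n2"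
    and Ye: "Y = transpose_mat (Emat n1 n2 A) * four_block_mat Y1 (0\<^sub>m n1 n2) (0\<^sub>m n2 n1) t * Emat n1 n2 A"
    and Z: "Z \<in> carrier_mat (n1 + n2) (n1 + n2)" and ZY: "Z * Y = 1\<^sub>m (n1 + n2)" and Zs: "transpose_mat Z = Z"
    and V: "V \<in> carrier_mat (n1 + n2) (n1 + n2)" and Vs: "transpose_mat V = V"
    and V3: "V3 \<in> carrier_mat n1 n2" and C: "C \<in> carrier_mat n2 n2"
    and Ve: "V = transpose_mat (Emat n1 n2 A) * four_block_mat (0\<^sub>m n1 n1) V3 (transpose_mat V3) C * Emat n1 n2 A"
  shows "mtrace (Z * V * Z * V) \<le> 2 * frob2 V3 / (a * lam) + frob2 C / lam\<^sup>2"
proof -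
  define N where "N = n1 + n2"
  define E where "E = Emat n1 n2 A"
  define Et where "Et = transpose_mat E"
  define Dm where "Dm = four_block_mat Y1 (0\<^sub>m n1 n2) (0\<^sub>m n2 n1) t"
  define W where "W = four_block_mat (0\<^sub>m n1 n1) V3 (transpose_mat V3) C"
  define M where "M = Z * V * Z"
  define K where "K = E * M * Et"
  have aN: "X1 * X2 * X3 = X1 * (X2 * X3)" if "X1 \<in> carrier_mat N N" "X2 \<in> carrier_mat N N" "X3 \<in> carrier_mat N N"
    for X1 X2 X3 :: "real mat" using assoc_mult_mat[OF that] .
  have cN: "X1 * X2 \<in> carrier_mat N N" if "X1 \<in> carrier_mat N N" "X2 \<in> carrier_mat N N"
    for X1 X2 :: "real mat" using that by simp
  have E: "E \<in> carrier_mat N N" unfolding E_def N_def by (rule Emat_carrier[OF A])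
  have Et: "Et \<in> carrier_mat N N" unfolding Et_def using E by simp
  have Dm: "Dm \<in> carrier_mat N N" unfolding Dm_def N_def using Y1 t by simp
  have W: "W \<in> carrier_mat N N" unfolding W_def N_def using V3 C by simp
  have Z': "Z \<in> carrier_mat N N" and V': "V \<in> carrier_mat N N" using Z V unfolding N_def by auto
  have M: "M \<in> carrier_mat N N" unfolding M_def using Z' V' by simp
  have K: "K \<in> carrier_mat N N" unfolding K_def using E M Et by simp
  have Y: "Y \<in> carrier_mat N N" unfolding Ye using E Dm Et unfolding E_def Et_def Dm_def by simp
  have Ye': "Y = Et * (Dm * E)" unfolding Ye E_def Et_def Dm_def using E Dm Et
    unfolding E_def Et_def Dm_def by simp
  have Ve': "V = Et * (W * E)" unfolding Ve E_def Et_def W_def using E W Et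
    unfolding E_def Et_def W_def by simp
  have ZY': "Z * (Y * X) = X" if "X \<in> carrier_mat N N" for X
    using ZY that Z' Y unfolding N_def by (metis assoc_mult_mat left_mult_one_mat)
  have Ms: "transpose_mat M = M"
  proof -
    have "transpose_mat M = transpose_mat Z * transpose_mat (Z * V)"
      unfolding M_def using transpose_mult[OF mult_carrier_mat[OF Z' V'] Z'] by simp
    also have "transpose_mat (Z * V) = transpose_mat V * transpose_mat Z" using transpose_mult[OF Z' V'] .
    finally show ?thesis unfolding M_def Zs Vs using Z' V' by simp
  qed
  have Ks: "transpose_mat K = K"
  proof -
    have "transpose_mat K = transpose_mat Et * transpose_mat (E * M)"
      unfolding K_def using transpose_mult[OF mult_carrier_mat[OF E M] Et] by simp
    also have "transpose_mat (E * M) = transpose_mat M * transpose_mat E" using transpose_mult[OF E M] .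
    finally show ?thesis unfolding K_def Et_def Ms using E M by simp
  qed
  have P1: "mtrace (Z * V * Z * V) = mtrace (K * W)"
  proof -
    have "Z * V * Z * V = M * V" unfolding M_def ..
    also have "\<dots> = M * (Et * (W * E))" using Ve' by simp
    also have "\<dots> = (M * Et * W) * E" using M Et W E by (simp add: aN cN)
    finally have "Z * V * Z * V = (M * Et * W) * E" .
    then have "mtrace (Z * V * Z * V) = mtrace (E * (M * Et * W))"
      using mtrace_cyc[of "M * Et * W" N N E] M Et W E by (simp add: cN)
    also have "E * (M * Et * W) = K * W" unfolding K_def using E M Et W by (simp add: aN cN)
    finally show ?thesis .
  qed
  have P2: "mtrace (Z * V * Z * V) = mtrace ((K * Dm) * (K * Dm))"
  proof -
    have ZYN: "Z * Y = 1\<^sub>m N" using ZY unfolding N_def .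
    have MY: "M * Y = Z * V" unfolding M_def using Z' V' Y ZY' by (simp add: aN cN ZYN)
    have "Z * V * Z * V = M * Y * (M * Y)" unfolding MY using Z' V' by (simp add: aN cN)
    also have "\<dots> = (M * Et * Dm * E * M * Et * Dm) * E" unfolding Ye' using M Et Dm E by (simp add: aN cN)
    finally have "mtrace (Z * V * Z * V) = mtrace (E * (M * Et * Dm * E * M * Et * Dm))"
      using mtrace_cyc[of "M * Et * Dm * E * M * Et * Dm" N N E] M Et Dm E by (simp add: cN)
    also have "E * (M * Et * Dm * E * M * Et * Dm) = (K * Dm) * (K * Dm)" unfolding K_def using E M Et Dm by (simp add: aN cN)
    finally show ?thesis .
  qed
  have K'': "K \<in> carrier_mat (n1 + n2) (n1 + n2)" using K unfolding N_def .
  have cb: "2 * mtrace (K * W) - mtrace ((K * Dm) * (K * Dm)) \<le> 2 * frob2 V3 / (a * lam) + frob2 C / lam\<^sup>2"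
    unfolding W_def Dm_def
    by (rule core_bound[OF Y1 Y1s Y1f L1 D1 D1d D1p Y1a a t ts tf L2 D2 D2d D2p tl lam K'' Ks V3 C])
  show ?thesis using cb P1 P2 by simp
qed

lemma cs_sum: fixes a b :: "nat \<Rightarrow> real"
  shows "(\<Sum>l\<in>S. a l * b l)\<^sup>2 \<le> (\<Sum>l\<in>S. (a l)\<^sup>2) * (\<Sum>l\<in>S. (b l)\<^sup>2)"
proof (rule quad_disc)
  fix r :: real
  have "0 \<le> (\<Sum>l\<in>S. (a l + r * b l)\<^sup>2)" by (auto intro: sum_nonneg)
  also have "\<dots> = (\<Sum>l\<in>S. (a l)\<^sup>2) + 2 * r * (\<Sum>l\<in>S. a l * b l) + r\<^sup>2 * (\<Sum>l\<in>S. (b l)\<^sup>2)"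
    by (simp add: power2_sum sum.distrib sum_distrib_left algebra_simps power_mult_distrib)
  finally show "0 \<le> (\<Sum>l\<in>S. (a l)\<^sup>2) + 2 * r * (\<Sum>l\<in>S. a l * b l) + r\<^sup>2 * (\<Sum>l\<in>S. (b l)\<^sup>2)" .
qed (auto intro: sum_nonneg)

lemma frob2_nonneg: "frob2 A \<ge> 0" unfolding frob2_def by (intro sum_nonneg) simp

lemma frob_mult: assumes A: "(A::real mat) \<in> carrier_mat m k" and B: "B \<in> carrier_mat k n"
  shows "frob2 (A * B) \<le> frob2 A * frob2 B"
proof -
  have "frob2 (A * B) = (\<Sum>i<m. \<Sum>j<n. (\<Sum>l<k. A $$ (i, l) * B $$ (l, j))\<^sup>2)"
    unfolding frob2_def using A B mult_entry[OF A B] by simp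
  also have "\<dots> \<le> (\<Sum>i<m. \<Sum>j<n. (\<Sum>l<k. (A $$ (i, l))\<^sup>2) * (\<Sum>l<k. (B $$ (l, j))\<^sup>2))"
    by (intro sum_mono cs_sum)
  also have "\<dots> = (\<Sum>i<m. \<Sum>l<k. (A $$ (i, l))\<^sup>2) * (\<Sum>j<n. \<Sum>l<k. (B $$ (l, j))\<^sup>2)"
    by (simp add: sum_product)
  also have "(\<Sum>j<n. \<Sum>l<k. (B $$ (l, j))\<^sup>2) = (\<Sum>l<k. \<Sum>j<n. (B $$ (l, j))\<^sup>2)" by (rule sum.swap)
  finally show ?thesis unfolding frob2_def using A B by simp
qed

lemma frob_bound_entries: assumes A: "(A::real mat) \<in> carrier_mat m n" and b: "\<And>i j. i < m \<Longrightarrow> j < n \<Longrightarrow> \<bar>A $$ (i, j)\<bar> \<le> B"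
  shows "frob2 A \<le> real m * real n * B\<^sup>2"
proof -
  have "frob2 A = (\<Sum>i<m. \<Sum>j<n. (A $$ (i, j))\<^sup>2)" unfolding frob2_def using A by simp
  also have "\<dots> \<le> (\<Sum>i<m. \<Sum>j<n. B\<^sup>2)"
  proof (intro sum_mono)
    fix i j assume "i \<in> {..<m}" "j \<in> {..<n}"
    then have "\<bar>A $$ (i, j)\<bar> \<le> B" using b by auto
    then have "\<bar>A $$ (i, j)\<bar>\<^sup>2 \<le> B\<^sup>2" by (intro power_mono) auto
    then show "(A $$ (i, j))\<^sup>2 \<le> B\<^sup>2" by simp
  qed
  also have "\<dots> = real m * real n * B\<^sup>2" by simp
  finally show ?thesis .
qed

lemma sq3: fixes x y z :: real shows "(x - y - z)\<^sup>2 \<le> 3 * (x\<^sup>2 + y\<^sup>2 + z\<^sup>2)"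
proof -
  have "0 \<le> (x + y)\<^sup>2 + (x + z)\<^sup>2 + (y - z)\<^sup>2" by simp
  then show ?thesis by (simp add: power2_eq_square algebra_simps)
qed

lemma frob_C: assumes V2: "(V2::real mat) \<in> carrier_mat n n" and P1: "P1 \<in> carrier_mat n n" and P2: "P2 \<in> carrier_mat n n"
  shows "frob2 (mat n n (\<lambda>(i, j). V2 $$ (i, j) - (P1 + P2) $$ (i, j))) \<le> 3 * frob2 V2 + 3 * frob2 P1 + 3 * frob2 P2"
proof -
  have "frob2 (mat n n (\<lambda>(i, j). V2 $$ (i, j) - (P1 + P2) $$ (i, j))) = (\<Sum>i<n. \<Sum>j<n. (V2 $$ (i, j) - P1 $$ (i, j) - P2 $$ (i, j))\<^sup>2)"
    unfolding frob2_def using P1 P2 by (auto intro!: sum.cong simp: algebra_simps)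
  also have "\<dots> \<le> (\<Sum>i<n. \<Sum>j<n. 3 * ((V2 $$ (i, j))\<^sup>2 + (P1 $$ (i, j))\<^sup>2 + (P2 $$ (i, j))\<^sup>2))"
    by (intro sum_mono sq3)
  also have "\<dots> = 3 * frob2 V2 + 3 * frob2 P1 + 3 * frob2 P2"
    unfolding frob2_def using V2 P1 P2 by (simp add: sum.distrib sum_distrib_left)
  finally show ?thesis .
qed

lemma ev_qf: assumes tc: "(t::real mat) \<in> carrier_mat n n" and v: "eigenvector t v k"
  shows "qf n t (\<lambda>i. v $ i) = k * nsq n (\<lambda>i. v $ i)" "nsq n (\<lambda>i. v $ i) > 0"
proof -
  have dr: "dim_row t = n" using tc by auto
  have vc: "v \<in> carrier_vec n" and v0: "v \<noteq> 0\<^sub>v n" and tv: "t *\<^sub>v v = k \<cdot>\<^sub>v v"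
    using v unfolding eigenvector_def dr by auto
  have "qf n t (\<lambda>i. v $ i) = v \<bullet> (t *\<^sub>v v)" using vec_qf[OF tc vc] by simp
  also have "\<dots> = k * (v \<bullet> v)" using tv vc by simp
  also have "v \<bullet> v = nsq n (\<lambda>i. v $ i)" unfolding nsq_def scalar_prod_def using vc
    by (auto simp: lessThan_atLeast0 power2_eq_square)
  finally show "qf n t (\<lambda>i. v $ i) = k * nsq n (\<lambda>i. v $ i)" .
  obtain i where i: "i < n" "v $ i \<noteq> 0" using v0 vc by (metis eq_vecI carrier_vecD index_zero_vec)
  have "nsq n (\<lambda>i. v $ i) \<noteq> 0" using nsq_zero[of n "\<lambda>i. v $ i" i] i by auto
  then show "nsq n (\<lambda>i. v $ i) > 0" using nsq_nonneg by (metis less_eq_real_def)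
qed

lemma lammin_ge: assumes pd: "pos_def_mat n t" and n: "1 \<le> n" and c: "\<And>x. qf n t x \<ge> c * nsq n x"
  shows "lambda_min t \<ge> c"
proof -
  have tc: "t \<in> carrier_mat n n" using pd unfolding pos_def_mat_def sym_mat_def by auto
  from lammin(1)[OF pd n] obtain v where v: "eigenvector t v (lambda_min t)" unfolding eigenvalue_def by blast
  note e = ev_qf[OF tc v]
  have "c * nsq n (\<lambda>i. v $ i) \<le> lambda_min t * nsq n (\<lambda>i. v $ i)" using c e(1) by metis
  then show ?thesis using e(2) by simp
qed

lemma vert_blk1: fixes X VX :: "real mat"
  assumes X: "X \<in> carrier_mat g g" and VX: "VX \<in> carrier_mat g g" and k: "k \<le> g"
    and d: "\<forall>i<k. \<forall>j<k. ((\<lambda>s. blk1 k (X + s \<cdot>\<^sub>m VX) $$ (i, j)) has_real_derivative 0) (at 0)"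
  shows "blk1 k VX = 0\<^sub>m k k"
proof (rule eq_matI)
  fix i j assume i: "i < dim_row (0\<^sub>m k k :: real mat)" and j: "j < dim_col (0\<^sub>m k k :: real mat)"
  then have i': "i < k" and j': "j < k" by auto
  have eq: "(\<lambda>s. blk1 k (X + s \<cdot>\<^sub>m VX) $$ (i, j)) = (\<lambda>s. X $$ (i, j) + s * VX $$ (i, j))"
    using i' j' k X VX unfolding blk1_def by auto
  have "((\<lambda>s. X $$ (i, j) + s * VX $$ (i, j)) has_real_derivative VX $$ (i, j)) (at 0)"
    by (auto intro!: derivative_eq_intros)
  moreover have "((\<lambda>s. X $$ (i, j) + s * VX $$ (i, j)) has_real_derivative 0) (at 0)"
    using d i' j' eq by metis
  ultimately have "VX $$ (i, j) = 0" by (rule DERIV_unique)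
  then show "blk1 k VX $$ (i, j) = 0\<^sub>m k k $$ (i, j)" using i' j' unfolding blk1_def by simp
qed (auto simp: blk1_def)

lemma vert_schur: fixes Y VY :: "real mat"
  assumes Y: "Y \<in> carrier_mat g g" and VY: "VY \<in> carrier_mat g g" and k: "k \<le> g"
    and b1: "blk1 k VY = 0\<^sub>m k k" and Pc0: "minv (blk1 k Y) \<in> carrier_mat k k"
    and d: "\<forall>i<g - k. \<forall>j<g - k. ((\<lambda>s. schur k (Y + s \<cdot>\<^sub>m VY) $$ (i, j)) has_real_derivative 0) (at 0)"
    and i: "i < g - k" and j: "j < g - k"
  shows "blk2 k VY $$ (i, j) = (\<Sum>b<k. (\<Sum>a<k. blk3 k VY $$ (a, i) * minv (blk1 k Y) $$ (a, b)) * blk3 k Y $$ (b, j)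
      + (\<Sum>a<k. blk3 k Y $$ (a, i) * minv (blk1 k Y) $$ (a, b)) * blk3 k VY $$ (b, j))"
proof -
  define P where "P = minv (blk1 k Y)"
  define y3 where "y3 = (\<lambda>a i. blk3 k Y $$ (a, i))"
  define v3 where "v3 = (\<lambda>a i. blk3 k VY $$ (a, i))"
  have vz: "VY $$ (a, b) = 0" if "a < k" "b < k" for a b
    using arg_cong[OF b1, of "\<lambda>M. M $$ (a, b)"] that unfolding blk1_def by simp
  have B1: "blk1 k (Y + s \<cdot>\<^sub>m VY) = blk1 k Y" for s
    unfolding blk1_def using Y VY k vz by (intro eq_matI) auto
  have f: "schur k (Y + s \<cdot>\<^sub>m VY) $$ (i, j) = (blk2 k Y $$ (i, j) + s * blk2 k VY $$ (i, j))
      - (\<Sum>b<k. (\<Sum>a<k. (y3 a i + s * v3 a i) * P $$ (a, b)) * (y3 b j + s * v3 b j))" for s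
  proof -
    define B where "B = blk3 k (Y + s \<cdot>\<^sub>m VY)"
    have Bc: "B \<in> carrier_mat k (g - k)" unfolding B_def blk3_def using Y VY by auto
    have Pc: "P \<in> carrier_mat k k" unfolding P_def by (rule Pc0)
    have Bent: "B $$ (a, c) = y3 a c + s * v3 a c" if "a < k" "c < g - k" for a c
      unfolding B_def y3_def v3_def blk3_def using that Y VY by auto
    have "(transpose_mat B * P * B) $$ (i, j) = (\<Sum>b<k. (transpose_mat B * P) $$ (i, b) * B $$ (b, j))"
      using mult_entry[OF mult_carrier_mat[OF transpose_carrier_mat[THEN iffD2, OF Bc] Pc] Bc i j] .
    also have "\<dots> = (\<Sum>b<k. (\<Sum>a<k. B $$ (a, i) * P $$ (a, b)) * B $$ (b, j))"
      using mult_entry[OF transpose_carrier_mat[THEN iffD2, OF Bc] Pc i] Bc i by (intro sum.cong) auto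
    also have "\<dots> = (\<Sum>b<k. (\<Sum>a<k. (y3 a i + s * v3 a i) * P $$ (a, b)) * (y3 b j + s * v3 b j))"
      using Bent i j by (intro sum.cong) auto
    finally have e: "(transpose_mat B * P * B) $$ (i, j) = \<dots>" .
    have "schur k (Y + s \<cdot>\<^sub>m VY) = blk2 k (Y + s \<cdot>\<^sub>m VY) - transpose_mat B * P * B"
      unfolding schur_def B_def P_def B1 ..
    then have "schur k (Y + s \<cdot>\<^sub>m VY) $$ (i, j) = blk2 k (Y + s \<cdot>\<^sub>m VY) $$ (i, j) - (transpose_mat B * P * B) $$ (i, j)"
      using i j Bc Pc Y VY unfolding blk2_def by simp
    also have "blk2 k (Y + s \<cdot>\<^sub>m VY) $$ (i, j) = blk2 k Y $$ (i, j) + s * blk2 k VY $$ (i, j)"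
      using i j Y VY unfolding blk2_def by simp
    finally show ?thesis using e by simp
  qed
  define D where "D = (\<Sum>b<k. (\<Sum>a<k. v3 a i * P $$ (a, b)) * y3 b j + (\<Sum>a<k. y3 a i * P $$ (a, b)) * v3 b j)"
  have "((\<lambda>s. (blk2 k Y $$ (i, j) + s * blk2 k VY $$ (i, j))
      - (\<Sum>b<k. (\<Sum>a<k. (y3 a i + s * v3 a i) * P $$ (a, b)) * (y3 b j + s * v3 b j))) has_real_derivative
      (blk2 k VY $$ (i, j) - D)) (at 0)"
    unfolding D_def by (auto intro!: derivative_eq_intros simp: sum.distrib algebra_simps)
  moreover have "((\<lambda>s. (blk2 k Y $$ (i, j) + s * blk2 k VY $$ (i, j))
      - (\<Sum>b<k. (\<Sum>a<k. (y3 a i + s * v3 a i) * P $$ (a, b)) * (y3 b j + s * v3 b j))) has_real_derivative 0) (at 0)"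
    using d i j f by (metis (no_types, lifting) ext)
  ultimately have "blk2 k VY $$ (i, j) - D = 0" by (rule DERIV_unique)
  then show ?thesis unfolding D_def P_def y3_def v3_def by simp
qed

definition Cm :: "nat \<Rightarrow> nat \<Rightarrow> real mat \<Rightarrow> real mat \<Rightarrow> real mat" where
  "Cm k n2 V A = mat n2 n2 (\<lambda>(i, j). blk2 k V $$ (i, j) - (transpose_mat (blk3 k V) * A + transpose_mat A * blk3 k V) $$ (i, j))"

lemma V_form: fixes V A :: "real mat"
  assumes V: "V \<in> carrier_mat (n1 + n2) (n1 + n2)" and Vs: "transpose_mat V = V" and V1: "blk1 n1 V = 0\<^sub>m n1 n1"
    and A: "A \<in> carrier_mat n1 n2"
  shows "V = transpose_mat (Emat n1 n2 A) * four_block_mat (0\<^sub>m n1 n1) (blk3 n1 V) (transpose_mat (blk3 n1 V)) (Cm n1 n2 V A) * Emat n1 n2 A"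
proof -
  have V3: "blk3 n1 V \<in> carrier_mat n1 n2" and V2: "blk2 n1 V \<in> carrier_mat n2 n2" using blk_carrier[OF V] by auto
  have C: "Cm n1 n2 V A \<in> carrier_mat n2 n2" unfolding Cm_def by simp
  have e: "blk2 n1 V = transpose_mat (blk3 n1 V) * A + transpose_mat A * blk3 n1 V + Cm n1 n2 V A"
    by (rule eq_matI) (use V3 V2 A in \<open>auto simp: Cm_def\<close>)
  have "V = four_block_mat (0\<^sub>m n1 n1) (blk3 n1 V) (transpose_mat (blk3 n1 V)) (blk2 n1 V)"
    using blk_decomp[OF V Vs] V1 by simp
  also have "\<dots> = transpose_mat (Emat n1 n2 A) * four_block_mat (0\<^sub>m n1 n1) (blk3 n1 V) (transpose_mat (blk3 n1 V)) (Cm n1 n2 V A) * Emat n1 n2 A"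
    unfolding e by (rule block_factor_V[OF V3 A C])
  finally show ?thesis .
qed

lemma C_zero: fixes V Y3 P :: "real mat"
  assumes V: "V \<in> carrier_mat (n1 + n2) (n1 + n2)" and P: "P \<in> carrier_mat n1 n1" and Ps: "transpose_mat P = P"
    and Y3: "Y3 \<in> carrier_mat n1 n2"
    and h: "\<And>i j. i < n2 \<Longrightarrow> j < n2 \<Longrightarrow> blk2 n1 V $$ (i, j) = (\<Sum>b<n1. (\<Sum>a<n1. blk3 n1 V $$ (a, i) * P $$ (a, b)) * Y3 $$ (b, j)
      + (\<Sum>a<n1. Y3 $$ (a, i) * P $$ (a, b)) * blk3 n1 V $$ (b, j))"
  shows "frob2 (Cm n1 n2 V (P * Y3)) = 0"
proof -
  have V3: "blk3 n1 V \<in> carrier_mat n1 n2" using blk_carrier[OF V] by auto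
  have A: "P * Y3 \<in> carrier_mat n1 n2" using P Y3 by simp
  have Psym: "P $$ (a, b) = P $$ (b, a)" if "a < n1" "b < n1" for a b
    using Ps that P by (metis carrier_matD index_transpose_mat(1))
  have z: "Cm n1 n2 V (P * Y3) $$ (i, j) = 0" if i: "i < n2" and j: "j < n2" for i j
  proof -
    have t1: "(transpose_mat (blk3 n1 V) * (P * Y3)) $$ (i, j) = (\<Sum>a<n1. blk3 n1 V $$ (a, i) * (\<Sum>b<n1. P $$ (a, b) * Y3 $$ (b, j)))"
      using mult_entry[OF transpose_carrier_mat[THEN iffD2, OF V3] A i j] mult_entry[OF P Y3 _ j] V3 i
      by (auto intro!: sum.cong)
    also have "\<dots> = (\<Sum>b<n1. (\<Sum>a<n1. blk3 n1 V $$ (a, i) * P $$ (a, b)) * Y3 $$ (b, j))"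
      by (simp add: sum_distrib_left sum_distrib_right mult.assoc, rule sum.swap)
    finally have t1': "(transpose_mat (blk3 n1 V) * (P * Y3)) $$ (i, j) = \<dots>" .
    have "(transpose_mat (P * Y3) * blk3 n1 V) $$ (i, j) = (\<Sum>b<n1. (P * Y3) $$ (b, i) * blk3 n1 V $$ (b, j))"
      using mult_entry[OF transpose_carrier_mat[THEN iffD2, OF A] V3 i j] A i P Y3 by (auto intro!: sum.cong)
    also have "\<dots> = (\<Sum>b<n1. (\<Sum>a<n1. Y3 $$ (a, i) * P $$ (a, b)) * blk3 n1 V $$ (b, j))"
      using mult_entry[OF P Y3 _ i] Psym by (auto intro!: sum.cong simp: mult.commute)
    finally have t2: "(transpose_mat (P * Y3) * blk3 n1 V) $$ (i, j) = \<dots>" .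
    show ?thesis unfolding Cm_def using i j t1' t2 h[OF i j] V3 A P Y3 by (simp add: sum.distrib)
  qed
  show ?thesis unfolding frob2_def using z by (simp add: Cm_def)
qed

lemma Y3_bound: fixes Y :: "real mat"
  assumes u: "u > 0" and J: "jacobi_siegel g u Y" and k: "k \<le> g" and i: "i < k" and j: "j < g"
  shows "\<bar>Y $$ (i, j)\<bar> \<le> real g * (max 1 u)\<^sup>2 * (\<Sum>m<k. \<bar>Y $$ (m, m)\<bar>)"
proof -
  define U where "U = max 1 (u::real)"
  define S where "S = (\<Sum>m<k. \<bar>Y $$ (m, m)\<bar>)"
  obtain L D where L: "L \<in> carrier_mat g g" and D: "D \<in> carrier_mat g g"
      and d1: "\<forall>i<g. L $$ (i, i) = 1" and up: "\<forall>i j. i < j \<and> j < g \<longrightarrow> L $$ (i, j) = 0"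
      and dg: "diagonal_mat D" and te: "Y = L * D * transpose_mat L"
      and lb: "\<forall>i j. j < i \<and> i < g \<longrightarrow> \<bar>L $$ (i, j)\<bar> < u"
      and d0: "0 < g \<longrightarrow> 1 < u * D $$ (0, 0)"
      and ds: "\<forall>i. Suc i < g \<longrightarrow> D $$ (i, i) < u * D $$ (Suc i, Suc i)"
    using J unfolding jacobi_siegel_def by blast
  have dpos: "D $$ (m, m) > 0" if "m < g" for m
  proof -
    have "D $$ (m, m) > 1 / u ^ Suc m" by (rule jac_d_low[OF u d0 ds that])
    moreover have "1 / u ^ Suc m > 0" using u by simp
    ultimately show ?thesis by linarith
  qed
  have S0: "S \<ge> 0" unfolding S_def by (auto intro: sum_nonneg)
  have U: "U \<ge> 1" "U \<ge> u" unfolding U_def by auto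
  have Lb: "\<bar>L $$ (a, b)\<bar> \<le> U" if "a < g" "b < g" for a b
  proof (cases a b rule: linorder_cases)
    case less then show ?thesis using up that U by auto
  next
    case equal then show ?thesis using d1 that U by auto
  next
    case greater
    then have "\<bar>L $$ (a, b)\<bar> < u" using lb that by auto
    then show ?thesis using U(2) by linarith
  qed
  have Ydiag: "D $$ (m, m) \<le> Y $$ (m, m)" if m: "m < g" for m
  proof -
    have "Y $$ (m, m) = (\<Sum>p<g. L $$ (m, p) * D $$ (p, p) * L $$ (m, p))" unfolding te by (rule jac_entry[OF L D dg m m])
    also have "\<dots> \<ge> L $$ (m, m) * D $$ (m, m) * L $$ (m, m)"
    proof (rule member_le_sum)
      fix p assume "p \<in> {..<g} - {m}"
      then have "D $$ (p, p) > 0" using dpos by auto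
      moreover have "L $$ (m, p) * D $$ (p, p) * L $$ (m, p) = D $$ (p, p) * (L $$ (m, p))\<^sup>2"
        by (simp add: power2_eq_square)
      ultimately show "0 \<le> L $$ (m, p) * D $$ (p, p) * L $$ (m, p)" by (simp only:) simp
    qed (use m in auto)
    finally show ?thesis using d1 m by simp
  qed
  have DS: "D $$ (m, m) \<le> S" if m: "m < k" for m
  proof -
    have "D $$ (m, m) \<le> \<bar>Y $$ (m, m)\<bar>" using Ydiag[of m] m k by linarith
    also have "\<bar>Y $$ (m, m)\<bar> \<le> S" unfolding S_def by (rule member_le_sum) (use m in auto)
    finally show ?thesis .
  qed
  have ig: "i < g" using i k by simp
  have "Y $$ (i, j) = (\<Sum>m<g. L $$ (i, m) * D $$ (m, m) * L $$ (j, m))" unfolding te by (rule jac_entry[OF L D dg ig j])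
  then have "\<bar>Y $$ (i, j)\<bar> \<le> (\<Sum>m<g. \<bar>L $$ (i, m) * D $$ (m, m) * L $$ (j, m)\<bar>)" by (simp add: sum_abs)
  also have "\<dots> \<le> (\<Sum>m<g. U * S * U)"
  proof (rule sum_mono)
    fix m assume m: "m \<in> {..<g}"
    show "\<bar>L $$ (i, m) * D $$ (m, m) * L $$ (j, m)\<bar> \<le> U * S * U"
    proof (cases "m \<le> i")
      case True
      then have mk: "m < k" using i by simp
      have a: "\<bar>L $$ (i, m)\<bar> \<le> U" using Lb ig m by auto
      have b: "\<bar>L $$ (j, m)\<bar> \<le> U" using Lb j m by auto
      have "D $$ (m, m) > 0" using dpos m by auto
      then have c: "\<bar>D $$ (m, m)\<bar> \<le> S" using DS[OF mk] by simp
      have "\<bar>L $$ (i, m) * D $$ (m, m) * L $$ (j, m)\<bar> = \<bar>L $$ (i, m)\<bar> * \<bar>D $$ (m, m)\<bar> * \<bar>L $$ (j, m)\<bar>"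
        by (simp add: abs_mult)
      also have "\<dots> \<le> U * S * U" using a b c S0 U
        by (intro mult_mono) auto
      finally show ?thesis .
    next
      case False
      then have "L $$ (i, m) = 0" using up m by auto
      then show ?thesis using S0 U by simp
    qed
  qed
  also have "\<dots> = real g * U\<^sup>2 * S" by (simp add: power2_eq_square mult_ac)
  finally show ?thesis unfolding U_def S_def .
qed

lemma lin_aux: fixes PX PY A B K K' Y F G H I J :: real
  assumes "PX \<le> 2 * A + (3 * B + 6 * K)" "PY \<le> 2 * Y" "K \<le> K'" "0 \<le> F" "0 \<le> G" "0 \<le> H" "0 \<le> I" "0 \<le> J"
  shows "1/2 * (PX + PY) \<le> A + 3 * K' + 3/2 * F + Y + 3 * H + 3/2 * G + (I + 3 * J + 3/2 * B)"
  using assms by argo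

lemma final_arith: fixes a c lam alpha fX3 fY3 fX2 PX PY :: real
  assumes a: "a > 0" and c: "c > 0" and lc: "lam \<ge> c" and al: "alpha \<ge> 0"
    and f3: "fX3 \<ge> 0" and f3y: "fY3 \<ge> 0" and f2: "fX2 \<ge> 0"
    and PX: "PX \<le> 2 * fX3 / (a * lam) + (3 * fX2 + 6 * alpha * fX3) / lam\<^sup>2"
    and PY: "PY \<le> 2 * fY3 / (a * lam)"
  shows "1/2 * (PX + PY) \<le> (1/a + 3 * alpha / c + 3/2) / lam * (fX3 + fY3) + (1/a + 3 * alpha / c + 3/2) / lam\<^sup>2 * fX2"
proof -
  have lam: "lam > 0" using c lc by simp
  have e1: "(1/a + 3 * alpha / c + 3/2) / lam * (fX3 + fY3) = fX3 / (a * lam) + 3 * (alpha * fX3 / (c * lam)) + 3/2 * (fX3 / lam)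
      + fY3 / (a * lam) + 3 * (alpha * fY3 / (c * lam)) + 3/2 * (fY3 / lam)"
    using a c lam by (simp add: field_simps)
  have e2: "(1/a + 3 * alpha / c + 3/2) / lam\<^sup>2 * fX2 = fX2 / (a * lam\<^sup>2) + 3 * (alpha * fX2 / (c * lam\<^sup>2)) + 3/2 * (fX2 / lam\<^sup>2)"
    using a c lam by (simp add: field_simps)
  have e3: "(3 * fX2 + 6 * alpha * fX3) / lam\<^sup>2 = 3 * (fX2 / lam\<^sup>2) + 6 * (alpha * fX3 / lam\<^sup>2)"
    using lam by (simp add: field_simps)
  have e4: "2 * fX3 / (a * lam) = 2 * (fX3 / (a * lam))" "2 * fY3 / (a * lam) = 2 * (fY3 / (a * lam))" by simp_all
  have k1: "alpha * fX3 / lam\<^sup>2 \<le> alpha * fX3 / (c * lam)"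
  proof (rule divide_left_mono)
    show "c * lam \<le> lam\<^sup>2" using lc lam by (simp add: power2_eq_square mult_right_mono)
  qed (use al f3 c lam in auto)
  have n1: "fX3 / lam \<ge> 0" "fY3 / lam \<ge> 0" "alpha * fY3 / (c * lam) \<ge> 0" "fX2 / (a * lam\<^sup>2) \<ge> 0"
    "alpha * fX2 / (c * lam\<^sup>2) \<ge> 0"
    using f3 f3y f2 al a c lam by auto
  have PX': "PX \<le> 2 * (fX3 / (a * lam)) + (3 * (fX2 / lam\<^sup>2) + 6 * (alpha * fX3 / lam\<^sup>2))"
    using PX by (simp only: e3 e4)
  have PY': "PY \<le> 2 * (fY3 / (a * lam))" using PY by (simp only: e4)
  show ?thesis unfolding e1 e2 by (rule lin_aux[OF PX' PY' k1 n1(1) n1(2) n1(3) n1(4) n1(5)])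
qed

theorem lemma3p13:
  fixes g g' :: nat and u :: real and X1 Y1 :: "real mat"
  assumes "1 \<le> g" and "g' < g"
    and "siegel_set g' u X1 Y1"
  shows "\<exists>C > 0. \<forall>t X Y VX VY.
     siegel_set_plus (g - g') u t \<and>
     siegel_set g u X Y \<and> blk1 g' X = X1 \<and> blk1 g' Y = Y1 \<and> schur g' Y = t \<and>
     sym_mat g VX \<and> sym_mat g VY \<and> vertical g' X Y VX VY \<longrightarrow>
     wp_norm2 Y VX VY \<le>
       C / lambda_min t * (frob2 (blk3 g' VX) + frob2 (blk3 g' VY))
       + C / (lambda_min t)\<^sup>2 * frob2 (blk2 g' VX)"
proof (cases "u > 0")
  case False
  show ?thesis
  proof (intro exI[of _ 1] conjI allI impI)
    fix t X Y VX VY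
    assume H: "siegel_set_plus (g - g') u t \<and>
     siegel_set g u X Y \<and> blk1 g' X = X1 \<and> blk1 g' Y = Y1 \<and> schur g' Y = t \<and>
     sym_mat g VX \<and> sym_mat g VY \<and> vertical g' X Y VX VY"
    then have "\<bar>X $$ (0, 0)\<bar> < u" using assms(1) unfolding siegel_set_def by auto
    then show "wp_norm2 Y VX VY \<le> 1 / lambda_min t * (frob2 (blk3 g' VX) + frob2 (blk3 g' VY))
       + 1 / (lambda_min t)\<^sup>2 * frob2 (blk2 g' VX)" using False by simp
  qed simp
next
  case True
  note u = True
  define n1 where "n1 = g'"
  define n2 where "n2 = g - g'"
  have gN: "g = n1 + n2" unfolding n1_def n2_def using assms(2) by simp
  have n2p: "1 \<le> n2" unfolding n2_def using assms(2) by simp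
  have Y1pd: "pos_def_mat n1 Y1" and Y1J: "jacobi_siegel n1 u Y1"
    using assms(3) unfolding siegel_set_def siegel_space_def n1_def by auto
  have Y1c: "Y1 \<in> carrier_mat n1 n1" and Y1t: "transpose_mat Y1 = Y1"
    using Y1pd unfolding pos_def_mat_def sym_mat_def by auto
  have Y1s: "symm n1 Y1" using Y1pd sym_symm unfolding pos_def_mat_def by auto
  have dY1: "det Y1 \<noteq> 0" by (rule pd_det[OF Y1pd])
  define P where "P = minv Y1"
  have Pc: "P \<in> carrier_mat n1 n1" and YP: "Y1 * P = 1\<^sub>m n1" and PY: "P * Y1 = 1\<^sub>m n1"
    unfolding P_def using minv_props[OF Y1c dY1] by auto
  have Ps: "transpose_mat P = P" unfolding P_def by (rule minv_sym[OF Y1c dY1 Y1t])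
  obtain a where a: "a > 0" and Y1a: "\<And>x. qf n1 Y1 x \<ge> a * nsq n1 x"
    using unif_pd[OF Y1c Y1s pd_qf_nonneg[OF Y1pd] Pc YP] by auto
  obtain L1 D1 where L1: "L1 \<in> carrier_mat n1 n1" and D1: "D1 \<in> carrier_mat n1 n1"
      and D1d: "diagonal_mat D1" and Y1f: "Y1 = L1 * D1 * transpose_mat L1"
      and d01: "0 < n1 \<longrightarrow> 1 < u * D1 $$ (0, 0)"
      and ds1: "\<forall>i. Suc i < n1 \<longrightarrow> D1 $$ (i, i) < u * D1 $$ (Suc i, Suc i)"
    using Y1J unfolding jacobi_siegel_def by blast
  have D1p: "D1 $$ (k, k) \<ge> 0" if "k < n1" for k
  proof -
    have "D1 $$ (k, k) > 1 / u ^ Suc k" by (rule jac_d_low[OF u d01 ds1 that])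
    moreover have "1 / u ^ Suc k > 0" using u by simp
    ultimately show ?thesis by linarith
  qed
  obtain c where c: "c > 0" and cJ: "\<And>t. jacobi_siegel n2 u t \<Longrightarrow> (\<forall>x. qf n2 t x \<ge> c * nsq n2 x)"
    using jac_lower[OF u, of n2] by auto
  define Bd where "Bd = real g * (max 1 u)\<^sup>2 * (\<Sum>m<n1. \<bar>Y1 $$ (m, m)\<bar>)"
  define alpha where "alpha = frob2 P * (real n1 * real n2 * Bd\<^sup>2)"
  have alpha0: "alpha \<ge> 0" unfolding alpha_def using frob2_nonneg[of P] by simp
  define Cc where "Cc = 1/a + 3 * alpha / c + 3/2"
  have Cc0: "Cc > 0" unfolding Cc_def using a c alpha0 by (simp add: add_pos_nonneg)
  show ?thesis
  proof (intro exI[of _ Cc] conjI allI impI Cc0)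
    fix t X Y VX VY
    assume H: "siegel_set_plus (g - g') u t \<and>
     siegel_set g u X Y \<and> blk1 g' X = X1 \<and> blk1 g' Y = Y1 \<and> schur g' Y = t \<and>
     sym_mat g VX \<and> sym_mat g VY \<and> vertical g' X Y VX VY"
    have tpd: "pos_def_mat n2 t" and tJ: "jacobi_siegel n2 u t"
      using H unfolding siegel_set_plus_def n2_def by auto
    have Ypd: "pos_def_mat g Y" and YJ: "jacobi_siegel g u Y" and Xs: "sym_mat g X"
      using H unfolding siegel_set_def siegel_space_def by auto
    have bY: "blk1 n1 Y = Y1" and sc: "schur n1 Y = t" and vert: "vertical n1 X Y VX VY"
      using H unfolding n1_def by auto
    have VXs: "sym_mat g VX" and VYs: "sym_mat g VY" using H by auto
    have Yc: "Y \<in> carrier_mat g g" and Yt: "transpose_mat Y = Y"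
      using Ypd unfolding pos_def_mat_def sym_mat_def by auto
    have Xc: "X \<in> carrier_mat g g" using Xs unfolding sym_mat_def by auto
    have VXc: "VX \<in> carrier_mat g g" and VXt: "transpose_mat VX = VX"
      and VYc: "VY \<in> carrier_mat g g" and VYt: "transpose_mat VY = VY"
      using VXs VYs unfolding sym_mat_def by auto
    have Yc': "Y \<in> carrier_mat (n1 + n2) (n1 + n2)" using Yc gN by simp
    have VXc': "VX \<in> carrier_mat (n1 + n2) (n1 + n2)" using VXc gN by simp
    have VYc': "VY \<in> carrier_mat (n1 + n2) (n1 + n2)" using VYc gN by simp
    have dY: "det Y \<noteq> 0" by (rule pd_det[OF Ypd])
    define Z where "Z = minv Y"
    have Zc: "Z \<in> carrier_mat g g" and ZY: "Z * Y = 1\<^sub>m g"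
      unfolding Z_def using minv_props[OF Yc dY] by auto
    have Zs: "transpose_mat Z = Z" unfolding Z_def by (rule minv_sym[OF Yc dY Yt])
    define Y3 where "Y3 = blk3 n1 Y"
    define Y2 where "Y2 = blk2 n1 Y"
    have Y3c: "Y3 \<in> carrier_mat n1 n2" and Y2c: "Y2 \<in> carrier_mat n2 n2"
      unfolding Y3_def Y2_def using blk_carrier[OF Yc'] by auto
    have te: "t = Y2 - transpose_mat Y3 * P * Y3"
      using sc unfolding schur_def bY Y2_def Y3_def P_def by simp
    define A where "A = P * Y3"
    have Ac: "A \<in> carrier_mat n1 n2" unfolding A_def using Pc Y3c by simp
    have Ye: "Y = transpose_mat (Emat n1 n2 A) * four_block_mat Y1 (0\<^sub>m n1 n2) (0\<^sub>m n2 n1) t * Emat n1 n2 A"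
    proof -
      have "Y = four_block_mat (blk1 n1 Y) (blk3 n1 Y) (transpose_mat (blk3 n1 Y)) (blk2 n1 Y)"
        by (rule blk_decomp[OF Yc' Yt])
      also have "\<dots> = four_block_mat Y1 Y3 (transpose_mat Y3) Y2" unfolding bY Y3_def Y2_def ..
      also have "\<dots> = transpose_mat (Emat n1 n2 A) * four_block_mat Y1 (0\<^sub>m n1 n2) (0\<^sub>m n2 n1) t * Emat n1 n2 A"
        unfolding A_def by (rule block_factor[OF Y1c Pc YP Ps Y3c Y2c te])
      finally show ?thesis .
    qed
    have tc: "t \<in> carrier_mat n2 n2" using tpd unfolding pos_def_mat_def sym_mat_def by auto
    have ts: "symm n2 t" using tpd sym_symm unfolding pos_def_mat_def by auto
    obtain L2 D2 where L2: "L2 \<in> carrier_mat n2 n2" and D2: "D2 \<in> carrier_mat n2 n2"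
        and D2d: "diagonal_mat D2" and tf: "t = L2 * D2 * transpose_mat L2"
        and d02: "0 < n2 \<longrightarrow> 1 < u * D2 $$ (0, 0)"
        and ds2: "\<forall>i. Suc i < n2 \<longrightarrow> D2 $$ (i, i) < u * D2 $$ (Suc i, Suc i)"
      using tJ unfolding jacobi_siegel_def by blast
    have D2p: "D2 $$ (k, k) \<ge> 0" if "k < n2" for k
    proof -
      have "D2 $$ (k, k) > 1 / u ^ Suc k" by (rule jac_d_low[OF u d02 ds2 that])
      moreover have "1 / u ^ Suc k > 0" using u by simp
      ultimately show ?thesis by linarith
    qed
    define lam where "lam = lambda_min t"
    have tl: "\<And>x. qf n2 t x \<ge> lam * nsq n2 x" unfolding lam_def by (rule lammin(2)[OF tpd n2p])
    have lc: "lam \<ge> c" unfolding lam_def by (rule lammin_ge[OF tpd n2p]) (use cJ[OF tJ] in auto)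
    have lam: "lam > 0" using lc c by simp
    have vd1: "\<forall>i<n1. \<forall>j<n1. ((\<lambda>s. blk1 n1 (X + s \<cdot>\<^sub>m VX) $$ (i, j)) has_real_derivative 0) (at 0)"
      and vd2: "\<forall>i<n1. \<forall>j<n1. ((\<lambda>s. blk1 n1 (Y + s \<cdot>\<^sub>m VY) $$ (i, j)) has_real_derivative 0) (at 0)"
      and vd3: "\<forall>i<g - n1. \<forall>j<g - n1. ((\<lambda>s. schur n1 (Y + s \<cdot>\<^sub>m VY) $$ (i, j)) has_real_derivative 0) (at 0)"
      using vert Yc unfolding vertical_def by auto
    have n1g: "n1 \<le> g" using gN by simp
    have VX1: "blk1 n1 VX = 0\<^sub>m n1 n1" by (rule vert_blk1[OF Xc VXc n1g vd1])
    have VY1: "blk1 n1 VY = 0\<^sub>m n1 n1" by (rule vert_blk1[OF Yc VYc n1g vd2])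
    have Pc0: "minv (blk1 n1 Y) \<in> carrier_mat n1 n1" using Pc unfolding bY P_def .
    have hY: "blk2 n1 VY $$ (i, j) = (\<Sum>b<n1. (\<Sum>a<n1. blk3 n1 VY $$ (a, i) * P $$ (a, b)) * Y3 $$ (b, j)
      + (\<Sum>a<n1. Y3 $$ (a, i) * P $$ (a, b)) * blk3 n1 VY $$ (b, j))" if "i < n2" "j < n2" for i j
    proof -
      have ij: "i < g - n1" "j < g - n1" using that gN by auto
      show ?thesis using vert_schur[OF Yc VYc n1g VY1 Pc0 vd3 ij] unfolding bY Y3_def P_def .
    qed
    have CY0: "frob2 (Cm n1 n2 VY A) = 0" unfolding A_def by (rule C_zero[OF VYc' Pc Ps Y3c hY])
    have Zc': "Z \<in> carrier_mat (n1 + n2) (n1 + n2)" using Zc gN by simp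
    have ZY': "Z * Y = 1\<^sub>m (n1 + n2)" using ZY gN by simp
    have V3X: "blk3 n1 VX \<in> carrier_mat n1 n2" and V2X: "blk2 n1 VX \<in> carrier_mat n2 n2"
      using blk_carrier[OF VXc'] by auto
    have V3Y: "blk3 n1 VY \<in> carrier_mat n1 n2" using blk_carrier[OF VYc'] by auto
    have CXc: "Cm n1 n2 VX A \<in> carrier_mat n2 n2" unfolding Cm_def by simp
    have CYc: "Cm n1 n2 VY A \<in> carrier_mat n2 n2" unfolding Cm_def by simp
    have PhX: "mtrace (Z * VX * Z * VX) \<le> 2 * frob2 (blk3 n1 VX) / (a * lam) + frob2 (Cm n1 n2 VX A) / lam\<^sup>2"
      by (rule phi_bound[OF Y1c Y1s Y1f L1 D1 D1d D1p Y1a a tc ts tf L2 D2 D2d D2p tl lam Ac Ye Zc' ZY' Zs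
            VXc' VXt V3X CXc V_form[OF VXc' VXt VX1 Ac]])
    have PhY: "mtrace (Z * VY * Z * VY) \<le> 2 * frob2 (blk3 n1 VY) / (a * lam) + frob2 (Cm n1 n2 VY A) / lam\<^sup>2"
      by (rule phi_bound[OF Y1c Y1s Y1f L1 D1 D1d D1p Y1a a tc ts tf L2 D2 D2d D2p tl lam Ac Ye Zc' ZY' Zs
            VYc' VYt V3Y CYc V_form[OF VYc' VYt VY1 Ac]])
    have Y3b: "\<bar>Y3 $$ (i, j)\<bar> \<le> Bd" if "i < n1" "j < n2" for i j
    proof -
      have "Y3 $$ (i, j) = Y $$ (i, j + n1)" unfolding Y3_def blk3_def using that Yc gN by simp
      moreover have "\<bar>Y $$ (i, j + n1)\<bar> \<le> real g * (max 1 u)\<^sup>2 * (\<Sum>m<n1. \<bar>Y $$ (m, m)\<bar>)"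
        by (rule Y3_bound[OF u YJ n1g that(1)]) (use that gN in simp)
      moreover have "(\<Sum>m<n1. \<bar>Y $$ (m, m)\<bar>) = (\<Sum>m<n1. \<bar>Y1 $$ (m, m)\<bar>)"
        unfolding bY[symmetric] blk1_def by simp
      ultimately show ?thesis unfolding Bd_def by simp
    qed
    have fA: "frob2 A \<le> alpha"
    proof -
      have "frob2 A \<le> frob2 P * frob2 Y3" unfolding A_def by (rule frob_mult[OF Pc Y3c])
      also have "frob2 Y3 \<le> real n1 * real n2 * Bd\<^sup>2" by (rule frob_bound_entries[OF Y3c Y3b])
      then have "frob2 P * frob2 Y3 \<le> frob2 P * (real n1 * real n2 * Bd\<^sup>2)"
        using frob2_nonneg[of P] by (simp add: mult_left_mono)
      finally show ?thesis unfolding alpha_def .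
    qed
    have fCX: "frob2 (Cm n1 n2 VX A) \<le> 3 * frob2 (blk2 n1 VX) + 6 * alpha * frob2 (blk3 n1 VX)"
    proof -
      have P1: "transpose_mat (blk3 n1 VX) * A \<in> carrier_mat n2 n2" using V3X Ac by simp
      have P2: "transpose_mat A * blk3 n1 VX \<in> carrier_mat n2 n2" using V3X Ac by simp
      have "frob2 (Cm n1 n2 VX A) \<le> 3 * frob2 (blk2 n1 VX) + 3 * frob2 (transpose_mat (blk3 n1 VX) * A) + 3 * frob2 (transpose_mat A * blk3 n1 VX)"
        unfolding Cm_def by (rule frob_C[OF V2X P1 P2])
      also have "frob2 (transpose_mat (blk3 n1 VX) * A) \<le> frob2 (blk3 n1 VX) * alpha"
      proof -
        have "frob2 (transpose_mat (blk3 n1 VX) * A) \<le> frob2 (transpose_mat (blk3 n1 VX)) * frob2 A"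
          by (rule frob_mult[OF _ Ac]) (use V3X in simp)
        also have "\<dots> \<le> frob2 (blk3 n1 VX) * alpha" using fA frob2_nonneg[of "blk3 n1 VX"]
          by (simp add: frob2_t mult_left_mono)
        finally show ?thesis .
      qed
      also have "frob2 (transpose_mat A * blk3 n1 VX) \<le> alpha * frob2 (blk3 n1 VX)"
      proof -
        have "frob2 (transpose_mat A * blk3 n1 VX) \<le> frob2 (transpose_mat A) * frob2 (blk3 n1 VX)"
          by (rule frob_mult[OF _ V3X]) (use Ac in simp)
        also have "\<dots> \<le> alpha * frob2 (blk3 n1 VX)" using fA frob2_nonneg[of "blk3 n1 VX"]
          by (simp add: frob2_t mult_right_mono)
        finally show ?thesis .
      qed
      finally show ?thesis by (simp add: algebra_simps)
    qed
    have PhX': "mtrace (Z * VX * Z * VX) \<le> 2 * frob2 (blk3 n1 VX) / (a * lam)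
        + (3 * frob2 (blk2 n1 VX) + 6 * alpha * frob2 (blk3 n1 VX)) / lam\<^sup>2"
    proof -
      have "frob2 (Cm n1 n2 VX A) / lam\<^sup>2 \<le> (3 * frob2 (blk2 n1 VX) + 6 * alpha * frob2 (blk3 n1 VX)) / lam\<^sup>2"
        using fCX lam by (simp add: divide_right_mono)
      then show ?thesis using PhX by linarith
    qed
    have PhY': "mtrace (Z * VY * Z * VY) \<le> 2 * frob2 (blk3 n1 VY) / (a * lam)" using PhY CY0 by simp
    have fin: "1/2 * (mtrace (Z * VX * Z * VX) + mtrace (Z * VY * Z * VY))
       \<le> Cc / lam * (frob2 (blk3 n1 VX) + frob2 (blk3 n1 VY)) + Cc / lam\<^sup>2 * frob2 (blk2 n1 VX)"
      unfolding Cc_def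
      by (rule final_arith[OF a c lc alpha0 frob2_nonneg frob2_nonneg frob2_nonneg PhX' PhY'])
    show "wp_norm2 Y VX VY \<le> Cc / lambda_min t * (frob2 (blk3 g' VX) + frob2 (blk3 g' VY))
       + Cc / (lambda_min t)\<^sup>2 * frob2 (blk2 g' VX)"
      using fin unfolding wp_norm2_def Z_def lam_def n1_def by simp
  qed
qed

end
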